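(* (a) For every natural number $n\geq1$, the powers $\mathcal{R}_{\mathcal{S}}^{\,n}$ and $\mathcal{I}_{\mathcal{S}}^{\,n}$ have a $\pi$-tree. (b) The countable powers $\mathcal{R}_{\mathcal{S}}^{\,\omega}$ and $\mathcal{I}_{\mathcal{S}}^{\,\omega}$ have a $\pi$-tree.
   Context: $\mathcal{R}_{\mathcal{S}}$ is the Sorgenfrey line (reals with the topology generated by $[a,b)$); $\mathcal{I}_{\mathcal{S}}=\mathcal{R}_{\mathcal{S}}\setminus\mathbb{Q}$ is the irrational Sorgenfrey line (subspace). Powers carry the Tychonoff product topology. Neighbourhoods are not necessarily open. ${}^{<\omega}\omega$ is the set of finite sequences of natural numbers. A tree is a strict partial order in which the set of predecessors of every node is well-ordered; a branch is a maximal chain; $\mathrm{sons}(x)$ is the set of immediate successors of $x$; $0$ denotes the least node. A foliage tree is a pair $\mathbf{F}=(T,l)$ with $T$ a tree (skeleton) and $l$ a function on its nodes, $\mathbf{F}_x:=l(x)$; tree notions apply via the skeleton. $\mathrm{shoot}_{\mathbf{F}}(v)=\{\bigcup_{x\in C}\mathbf{F}_x: C\text{ a cofinite subset of }\mathrm{sons}_{\mathbf{F}}(v)\}$; $\mathrm{scope}_{\mathbf{F}}(p)=\{x:p\in\mathbf{F}_x\}$. $\gamma\gg\delta$ means every nonempty $D\in\delta$ contains some nonempty $G\in\gamma$. $\mathbf{F}$ is locally strict if each non-maximal leaf $\mathbf{F}_x$ is the disjoint union of $\mathbf{F}_s$, $s\in\mathrm{sons}(x)$; has strict branches if it has a node and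 for each branch $B$, $\bigcap_{x\in B}\mathbf{F}_x$ is a singleton; is open in $X$ if all leaves are open in $X$; is a foliage $\omega,\omega$-tree if its skeleton is order-isomorphic to $({}^{<\omega}\omega,\subsetneq)$. A Baire foliage tree on $X$ is an open in $X$, locally strict foliage $\omega,\omega$-tree with strict branches and $\mathbf{F}_{0_{\mathbf{F}}}=X$. $\mathbf{F}$ grows into $X$ if for every $p\in X$ and neighbourhood $U$ of $p$ there is $z\in\mathrm{scope}_{\mathbf{F}}(p)$ with $\mathrm{shoot}_{\mathbf{F}}(z)\gg\{U\}$. A $\pi$-tree on $X$ is a Baire foliage tree on $X$ that grows into $X$; a space has a $\pi$-tree if there is one on it. *)

theory Defs
  imports "HOL-Analysis.Analysis" "HOL-Library.Sublist"
begin

definition sorgenfrey_line :: "real topology" where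
  "sorgenfrey_line = topology_generated_by {{a..<b} | a b. a < b}"

definition irrational_sorgenfrey_line :: "real topology" where
  "irrational_sorgenfrey_line = subtopology sorgenfrey_line (- \<rat>)"

definition fin_power :: "'a topology \<Rightarrow> nat \<Rightarrow> (nat \<Rightarrow> 'a) topology" where
  "fin_power X n = product_topology (\<lambda>_. X) {..<n}"

definition omega_power :: "'a topology \<Rightarrow> (nat \<Rightarrow> 'a) topology" where
  "omega_power X = product_topology (\<lambda>_. X) (UNIV :: nat set)"

text \<open>A foliage omega,omega-tree is represented with skeleton literally equal to
  the finite sequences of naturals, ordered by strict extension (strict prefix);
  the leaf labelling is F.\<close>

definition sons :: "nat list \<Rightarrow> nat list set" where
  "sons v = {v @ [k] | k. True}"

definition tree_chain :: "nat list set \<Rightarrow> bool" where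
  "tree_chain B \<longleftrightarrow> (\<forall>x\<in>B. \<forall>y\<in>B. x = y \<or> strict_prefix x y \<or> strict_prefix y x)"

definition branch :: "nat list set \<Rightarrow> bool" where
  "branch B \<longleftrightarrow> tree_chain B \<and> (\<forall>C. tree_chain C \<and> B \<subseteq> C \<longrightarrow> C = B)"

definition shoot :: "(nat list \<Rightarrow> 'a set) \<Rightarrow> nat list \<Rightarrow> 'a set set" where
  "shoot F v = {\<Union>x\<in>C. F x | C. C \<subseteq> sons v \<and> finite (sons v - C)}"

definition scope :: "(nat list \<Rightarrow> 'a set) \<Rightarrow> 'a \<Rightarrow> nat list set" where
  "scope F p = {x. p \<in> F x}"

definition refines :: "'a set set \<Rightarrow> 'a set set \<Rightarrow> bool" (infix "\<ggreater>" 50) where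
  "\<gamma> \<ggreater> \<delta> \<longleftrightarrow> (\<forall>D\<in>\<delta>. D \<noteq> {} \<longrightarrow> (\<exists>G\<in>\<gamma>. G \<noteq> {} \<and> G \<subseteq> D))"

definition locally_strict :: "(nat list \<Rightarrow> 'a set) \<Rightarrow> bool" where
  "locally_strict F \<longleftrightarrow>
     (\<forall>x. sons x \<noteq> {} \<longrightarrow> F x = (\<Union>s\<in>sons x. F s) \<and> disjoint_family_on F (sons x))"

definition strict_branches :: "(nat list \<Rightarrow> 'a set) \<Rightarrow> bool" where
  "strict_branches F \<longleftrightarrow> (\<forall>B. branch B \<longrightarrow> (\<exists>p. (\<Inter>x\<in>B. F x) = {p}))"

definition open_foliage :: "'a topology \<Rightarrow> (nat list \<Rightarrow> 'a set) \<Rightarrow> bool" where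
  "open_foliage X F \<longleftrightarrow> (\<forall>x. openin X (F x))"

definition baire_foliage_tree :: "'a topology \<Rightarrow> (nat list \<Rightarrow> 'a set) \<Rightarrow> bool" where
  "baire_foliage_tree X F \<longleftrightarrow>
     open_foliage X F \<and> locally_strict F \<and> strict_branches F \<and> F [] = topspace X"

definition neighbourhood :: "'a topology \<Rightarrow> 'a set \<Rightarrow> 'a \<Rightarrow> bool" where
  "neighbourhood X U p \<longleftrightarrow> U \<subseteq> topspace X \<and> (\<exists>V. openin X V \<and> p \<in> V \<and> V \<subseteq> U)"

definition grows_into :: "'a topology \<Rightarrow> (nat list \<Rightarrow> 'a set) \<Rightarrow> bool" where
  "grows_into X F \<longleftrightarrow>
     (\<forall>p\<in>topspace X. \<forall>U. neighbourhood X U p \<longrightarrow> (\<exists>z\<in>scope F p. shoot F z \<ggreater> {U}))"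

definition pi_tree :: "'a topology \<Rightarrow> (nat list \<Rightarrow> 'a set) \<Rightarrow> bool" where
  "pi_tree X F \<longleftrightarrow> baire_foliage_tree X F \<and> grows_into X F"

definition has_pi_tree :: "'a topology \<Rightarrow> bool" where
  "has_pi_tree X \<longleftrightarrow> (\<exists>F. pi_tree X F)"

end

theory Submission
  imports Defs "HOL-Library.Nat_Bijection" "HOL-Library.Countable"
begin


section \<open>Sorgenfrey basics\<close>

lemma sorg_topspace [simp]: "topspace sorgenfrey_line = UNIV"
proof -
  have "x \<in> \<Union>{{a..<b} | a b. a < b}" for x :: real
  proof (rule UnionI[of "{x..<x+1}"])
    show "{x..<x+1} \<in> {{a..<b} | a b. a < b}" by (rule CollectI, rule exI[of _ x], rule exI[of _ "x+1"]) simp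
  qed simp
  then show ?thesis unfolding sorgenfrey_line_def by auto
qed

lemma sorg_open_Ico: "openin sorgenfrey_line {a..<b}"
proof (cases "a < b")
  case True then show ?thesis unfolding sorgenfrey_line_def
    by (intro topology_generated_by_Basis) auto
qed auto

lemma gen_sorg_local:
  assumes "generate_topology_on {{a..<b} | a b. a < (b::real)} U" "p \<in> U"
  shows "\<exists>e>0. {p..<p+e} \<subseteq> U"
  using assms
proof (induction arbitrary: p rule: generate_topology_on.induct)
  case Empty then show ?case by simp
next
  case (Int a b)
  then obtain e1 e2 where "e1>0" "{p..<p+e1} \<subseteq> a" "e2 > 0" "{p..<p+e2} \<subseteq> b" by blast
  then show ?case by (intro exI[of _ "min e1 e2"]) (auto simp: subset_eq)
next
  case (UN K)
  then obtain k where "k \<in> K" "p \<in> k" by blast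
  with UN show ?case by blast
next
  case (Basis s)
  then obtain a b where "s = {a..<b}" by blast
  with Basis show ?case by (intro exI[of _ "b - p"]) auto
qed

lemma sorg_local:
  assumes "openin sorgenfrey_line U" "p \<in> U"
  shows "\<exists>e>0. {p..<p+e} \<subseteq> U"
  using assms gen_sorg_local unfolding sorgenfrey_line_def openin_topology_generated_by_iff by blast

section \<open>Branches\<close>

definition path :: "(nat \<Rightarrow> nat) \<Rightarrow> nat \<Rightarrow> nat list" where
  "path f n = map f [0..<n]"

lemma branch_max:
  assumes "branch B" "tree_chain C" "B \<subseteq> C" shows "C = B"
proof -
  from assms(1) have "\<forall>C. tree_chain C \<and> B \<subseteq> C \<longrightarrow> C = B" unfolding branch_def by (rule conjunct2)
  then have "tree_chain C \<and> B \<subseteq> C \<longrightarrow> C = B" by (rule spec)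
  then show ?thesis using assms(2,3) by blast
qed

lemma chain_cmp: "tree_chain B \<Longrightarrow> x \<in> B \<Longrightarrow> y \<in> B \<Longrightarrow> prefix x y \<or> prefix y x"
proof -
  assume "tree_chain B" "x \<in> B" "y \<in> B"
  then have "x = y \<or> strict_prefix x y \<or> strict_prefix y x" unfolding tree_chain_def by blast
  then show ?thesis by (elim disjE) (simp_all add: strict_prefix_def)
qed

lemma prefix_nth:
  assumes "prefix x y" "i < length x" shows "x ! i = y ! i"
proof -
  from assms(1) obtain zs where "y = x @ zs" by (rule prefixE)
  then show ?thesis using assms(2) by (simp add: nth_append)
qed

lemma branch_prefix_closed:
  assumes "branch B" "w \<in> B" "prefix u w"
  shows "u \<in> B"
proof -
  have ch: "tree_chain B" using assms(1) unfolding branch_def by (rule conjunct1)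
  have "tree_chain (insert u B)"
    unfolding tree_chain_def
  proof (intro ballI)
    fix x y assume "x \<in> insert u B" "y \<in> insert u B"
    have c: "prefix u y \<or> prefix y u" if "y \<in> B" for y
    proof -
      from chain_cmp[OF ch that assms(2)] show ?thesis
      proof
        assume "prefix y w" then show ?thesis using prefix_same_cases[OF assms(3)] by blast
      next
        assume "prefix w y" then have "prefix u y" using assms(3) by (rule prefix_order.trans[rotated])
        then show ?thesis by blast
      qed
    qed
    have "prefix x y \<or> prefix y x"
    proof (cases "x = u")
      case True
      show ?thesis
      proof (cases "y = u")
        case False then have "y \<in> B" using \<open>y \<in> insert u B\<close> by blast
        then show ?thesis using c True by blast
      qed (use True in simp)
    next
      case False then have xB: "x \<in> B" using \<open>x \<in> insert u B\<close> by blast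
      show ?thesis
      proof (cases "y = u")
        case True then show ?thesis using c[OF xB] by blast
      next
        case False then have "y \<in> B" using \<open>y \<in> insert u B\<close> by blast
        then show ?thesis using chain_cmp[OF ch xB] by blast
      qed
    qed
    then show "x = y \<or> strict_prefix x y \<or> strict_prefix y x"
      unfolding strict_prefix_def by blast
  qed
  then have "insert u B = B" using branch_max[OF assms(1)] by blast
  then show ?thesis by blast
qed

lemma branch_unbounded:
  assumes "branch B"
  shows "\<exists>w\<in>B. n \<le> length w"
proof (rule ccontr)
  assume "\<not> ?thesis"
  then have lt: "\<forall>w\<in>B. length w < n" by auto
  have ch: "tree_chain B" using assms unfolding branch_def by (rule conjunct1)
  have "B \<noteq> {}"
  proof
    assume "B = {}"
    have "tree_chain {[]}" by (simp add: tree_chain_def)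
    then have "{[]} = B" using branch_max[OF assms] \<open>B = {}\<close> by blast
    with \<open>B = {}\<close> show False by simp
  qed
  have fin: "finite (length ` B)"
  proof (rule finite_subset[of _ "{..<n}"])
    show "length ` B \<subseteq> {..<n}" using lt by auto
  qed simp
  have "Max (length ` B) \<in> length ` B" using Max_in[OF fin] \<open>B \<noteq> {}\<close> by simp
  then obtain w where w: "w \<in> B" "Max (length ` B) = length w" by (rule imageE)
  have "\<forall>y\<in>B. prefix y w"
  proof
    fix y assume "y \<in> B"
    then have "length y \<le> length w" using Max_ge[OF fin, of "length y"] w(2) by auto
    from chain_cmp[OF ch \<open>y \<in> B\<close> w(1)] show "prefix y w"
    proof
      assume "prefix w y"
      then have "length w \<le> length y" by (rule prefix_length_le)
      with \<open>length y \<le> length w\<close> have "length y = length w" by simp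
      moreover obtain zs where "y = w @ zs" using \<open>prefix w y\<close> by (rule prefixE)
      ultimately have "w = y" by simp
      then show "prefix y w" by simp
    qed
  qed
  then have sp: "\<forall>y\<in>B. strict_prefix y (w @ [0])"
  proof (intro ballI)
    fix y assume "y \<in> B"
    with \<open>\<forall>y\<in>B. prefix y w\<close> have "prefix y w" by blast
    then have "prefix y (w @ [0])" by (rule prefix_prefix)
    moreover have "y \<noteq> w @ [0]"
    proof
      assume "y = w @ [0]"
      then have "length y = Suc (length w)" by simp
      with prefix_length_le[OF \<open>prefix y w\<close>] show False by simp
    qed
    ultimately show "strict_prefix y (w @ [0])" by (simp add: strict_prefix_def)
  qed
  have "tree_chain (insert (w @ [0]) B)"
    unfolding tree_chain_def
  proof (intro ballI)
    fix x y assume "x \<in> insert (w @ [0]) B" "y \<in> insert (w @ [0]) B"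
    have chB: "\<forall>x\<in>B. \<forall>y\<in>B. x = y \<or> strict_prefix x y \<or> strict_prefix y x"
      using ch unfolding tree_chain_def .
    show "x = y \<or> strict_prefix x y \<or> strict_prefix y x"
    proof (cases "x = w @ [0]")
      case True
      show ?thesis
      proof (cases "y = w @ [0]")
        case False
        then have "y \<in> B" using \<open>y \<in> insert (w @ [0]) B\<close> by blast
        with sp True show ?thesis by blast
      qed (use True in simp)
    next
      case False
      then have xB: "x \<in> B" using \<open>x \<in> insert (w @ [0]) B\<close> by blast
      show ?thesis
      proof (cases "y = w @ [0]")
        case True
        with sp xB show ?thesis by blast
      next
        case False
        then have "y \<in> B" using \<open>y \<in> insert (w @ [0]) B\<close> by blast
        with chB xB show ?thesis by blast
      qed
    qed
  qed
  then have "insert (w @ [0]) B = B" using branch_max[OF assms] by blast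
  then have "w @ [0] \<in> B" by blast
  then have "length (w @ [0]) \<in> length ` B" by (rule imageI)
  then have "length (w @ [0]) \<le> Max (length ` B)" by (rule Max_ge[OF fin])
  with w show False by simp
qed

lemma branch_is_path:
  assumes "branch B"
  shows "\<exists>f. B = range (path f)"
proof -
  have ch: "tree_chain B" using assms unfolding branch_def by (rule conjunct1)
  define W where "W i = (SOME w. w \<in> B \<and> Suc i \<le> length w)" for i
  have W: "W i \<in> B \<and> Suc i \<le> length (W i)" for i
  proof -
    obtain w where "w \<in> B" "Suc i \<le> length w" using branch_unbounded[OF assms, of "Suc i"] by blast
    then show ?thesis unfolding W_def by (rule someI2[where Q="\<lambda>w. w \<in> B \<and> Suc i \<le> length w", OF conjI])
  qed
  define f where "f i = W i ! i" for i
  have key: "w = path f (length w)" if "w \<in> B" for w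
  proof (rule nth_equalityI)
    show "length w = length (path f (length w))" by (simp add: path_def)
    fix i assume "i < length w"
    have iW: "i < length (W i)" using W[of i] by simp
    from chain_cmp[OF ch that, of "W i"] W[of i] have "prefix w (W i) \<or> prefix (W i) w" by blast
    then have "w ! i = W i ! i"
    proof
      assume "prefix w (W i)" then show ?thesis using prefix_nth \<open>i < length w\<close> by blast
    next
      assume "prefix (W i) w" then show ?thesis using prefix_nth iW by metis
    qed
    then show "w ! i = path f (length w) ! i" using \<open>i < length w\<close> by (simp add: path_def f_def)
  qed
  have "B = range (path f)"
  proof
    show "B \<subseteq> range (path f)" using key by blast
    show "range (path f) \<subseteq> B"
    proof
      fix u assume "u \<in> range (path f)"
      then obtain n where u: "u = path f n" by auto
      obtain w where w: "w \<in> B" "n \<le> length w" using branch_unbounded[OF assms] by blast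
      have "take n w = take n (path f (length w))" using key[OF w(1)] by simp
      also have "\<dots> = path f n" using w(2) by (simp add: path_def take_map)
      finally have "take n w = path f n" .
      moreover have "take n w \<in> B" using branch_prefix_closed[OF assms w(1)] by (simp add: take_is_prefix)
      ultimately show "u \<in> B" using u by simp
    qed
  qed
  then show ?thesis by blast
qed

section \<open>One-dimensional nested intervals\<close>

lemma one_d:
  fixes A B :: "nat \<Rightarrow> real"
  assumes mono: "\<And>n. n \<ge> n0 \<Longrightarrow> A n \<le> A (Suc n) \<and> B (Suc n) \<le> B n \<and> A n < B n"
    and small: "\<And>e. e > 0 \<Longrightarrow> \<exists>n\<ge>n0. B n - A n < e"
    and sdec: "\<And>n. n \<ge> n0 \<Longrightarrow> \<exists>m>n. B m < B n"
  shows "\<exists>y. (\<forall>n\<ge>n0. A n \<le> y \<and> y < B n) \<and> (\<forall>v. (\<forall>n\<ge>n0. A n \<le> v \<and> v < B n) \<longrightarrow> v = y)"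
proof -
  define A' where "A' k = A (n0 + k)" for k
  define B' where "B' k = B (n0 + k)" for k
  have inc: "incseq A'" unfolding A'_def by (rule incseq_SucI) (use mono in auto)
  have dec: "decseq B'" unfolding B'_def by (rule decseq_SucI) (use mono in auto)
  have lt: "A' k < B' k" for k unfolding A'_def B'_def using mono by auto
  have AB: "A' n \<le> B' m" for n m
  proof -
    have "A' n \<le> A' (max n m)" using inc by (simp add: incseq_def)
    also have "\<dots> < B' (max n m)" by (rule lt)
    also have "\<dots> \<le> B' m" using dec by (simp add: decseq_def)
    finally show ?thesis by simp
  qed
  have bdd: "bdd_above (range A')" using AB by (intro bdd_aboveI2) 
  define y where "y = Sup (range A')"
  have Ay: "A' n \<le> y" for n unfolding y_def using bdd by (intro cSup_upper) auto
  have yB: "y \<le> B' m" for m unfolding y_def using AB by (intro cSup_least) auto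
  have ylt: "y < B' n" for n
  proof -
    obtain m where "m > n0 + n" "B m < B (n0 + n)" using sdec[of "n0+n"] by auto
    then have "B' (m - n0) < B' n" unfolding B'_def by simp
    with yB[of "m - n0"] show ?thesis by simp
  qed
  have P: "\<forall>n\<ge>n0. A n \<le> y \<and> y < B n"
  proof (intro allI impI)
    fix n assume "n \<ge> n0"
    then show "A n \<le> y \<and> y < B n" using Ay[of "n - n0"] ylt[of "n - n0"] unfolding A'_def B'_def by simp
  qed
  have U: "v = y" if v: "\<forall>n\<ge>n0. A n \<le> v \<and> v < B n" for v
  proof (rule ccontr)
    assume "v \<noteq> y"
    then have "\<bar>v - y\<bar> > 0" by simp
    then obtain n where n: "n \<ge> n0" "B n - A n < \<bar>v - y\<bar>" using small by blast
    from v n(1) P n(1) have "\<bar>v - y\<bar> < B n - A n" by (smt (verit))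
    with n show False by simp
  qed
  from P U show ?thesis by blast
qed




section \<open>Subdivision points\<close>

definition cpt :: "real \<Rightarrow> real \<Rightarrow> nat \<Rightarrow> real" where
  "cpt a b m = b - (b - a) / 2 ^ m"

lemma cpt_0 [simp]: "cpt a b 0 = a" by (simp add: cpt_def)

lemma cpt_Suc_less: "a < b \<Longrightarrow> cpt a b m < cpt a b (Suc m)"
  unfolding cpt_def by (simp add: divide_strict_left_mono)

lemma cpt_strict: "a < b \<Longrightarrow> m < m' \<Longrightarrow> cpt a b m < cpt a b m'"
  using lift_Suc_mono_less[of "cpt a b"] cpt_Suc_less by blast

lemma cpt_mono: "a < b \<Longrightarrow> m \<le> m' \<Longrightarrow> cpt a b m \<le> cpt a b m'"
  using cpt_strict[of a b m m'] by (cases "m = m'") auto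

lemma cpt_less_b: "a < b \<Longrightarrow> cpt a b m < b"
  unfolding cpt_def by simp

lemma cpt_ge_a: "a < b \<Longrightarrow> a \<le> cpt a b m"
  using cpt_mono[of a b 0 m] by simp

lemma cpt_Suc_diff: "cpt a b (Suc m) - cpt a b m = (b - a) / 2 ^ Suc m"
  unfolding cpt_def by (simp add: field_simps)

lemma cpt_exists: assumes "a < b" "x < b" shows "\<exists>k. x < cpt a b k"
proof -
  obtain k where k: "(b - a) / (b - x) < 2 ^ k" using real_arch_pow[of 2 "(b - a) / (b - x)"] by auto
  have "(b - a) < 2 ^ k * (b - x)" using k assms by (simp add: divide_less_eq mult.commute)
  then have "(b - a) / 2 ^ k < b - x" by (simp add: divide_less_eq mult.commute)
  then show ?thesis unfolding cpt_def by (intro exI[of _ k]) simp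
qed

lemma cpt_rat: "a \<in> \<rat> \<Longrightarrow> b \<in> \<rat> \<Longrightarrow> cpt a b m \<in> \<rat>"
  unfolding cpt_def by (intro Rats_diff Rats_divide Rats_power) auto

definition lev :: "real \<Rightarrow> real \<Rightarrow> real \<Rightarrow> nat" where
  "lev a b x = (LEAST k. x < cpt a b (Suc k))"

lemma lev_props:
  assumes "a < b" "a \<le> x" "x < b"
  shows "cpt a b m \<le> x \<longleftrightarrow> m \<le> lev a b x"
    and "x < cpt a b (Suc m) \<longleftrightarrow> lev a b x \<le> m"
proof -
  obtain k0 where "x < cpt a b k0" using cpt_exists assms by blast
  then have ex: "x < cpt a b (Suc k0)" using cpt_mono[OF assms(1), of k0 "Suc k0"] by simp
  have L1: "x < cpt a b (Suc (lev a b x))" unfolding lev_def by (rule LeastI[of _ k0]) (rule ex)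
  have L2: "cpt a b (lev a b x) \<le> x"
  proof (cases "lev a b x")
    case 0 then show ?thesis using assms by simp
  next
    case (Suc l)
    then have "l < lev a b x" by simp
    then have "\<not> x < cpt a b (Suc l)" unfolding lev_def by (rule not_less_Least)
    then show ?thesis using Suc by simp
  qed
  show "x < cpt a b (Suc m) \<longleftrightarrow> lev a b x \<le> m"
  proof
    assume "x < cpt a b (Suc m)" then show "lev a b x \<le> m" unfolding lev_def by (rule Least_le)
  next
    assume "lev a b x \<le> m"
    then have "cpt a b (Suc (lev a b x)) \<le> cpt a b (Suc m)" using cpt_mono[OF assms(1)] by simp
    with L1 show "x < cpt a b (Suc m)" by simp
  qed
  show "cpt a b m \<le> x \<longleftrightarrow> m \<le> lev a b x"
  proof
    assume "m \<le> lev a b x"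
    then have "cpt a b m \<le> cpt a b (lev a b x)" using cpt_mono[OF assms(1)] by simp
    with L2 show "cpt a b m \<le> x" by simp
  next
    assume h: "cpt a b m \<le> x"
    show "m \<le> lev a b x"
    proof (rule ccontr)
      assume "\<not> m \<le> lev a b x"
      then have "Suc (lev a b x) \<le> m" by simp
      then have "cpt a b (Suc (lev a b x)) \<le> cpt a b m" using cpt_mono[OF assms(1)] by simp
      with L1 h show False by simp
    qed
  qed
qed

definition dpt :: "real \<Rightarrow> real \<Rightarrow> nat \<Rightarrow> real" where
  "dpt a q k = a + (q - a) / 2 ^ k"

lemma dpt_0 [simp]: "dpt a q 0 = q" by (simp add: dpt_def)

lemma dpt_Suc_less: "a < q \<Longrightarrow> dpt a q (Suc k) < dpt a q k"
  unfolding dpt_def by (simp add: divide_strict_left_mono)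

lemma dpt_strict: assumes "a < q" "k < k'" shows "dpt a q k' < dpt a q k"
proof -
  have "- dpt a q k < - dpt a q k'"
    using lift_Suc_mono_less[of "\<lambda>k. - dpt a q k" k k'] dpt_Suc_less[OF assms(1)] assms(2) by simp
  then show ?thesis by simp
qed

lemma dpt_mono: "a < q \<Longrightarrow> k \<le> k' \<Longrightarrow> dpt a q k' \<le> dpt a q k"
  using dpt_strict[of a q k k'] by (cases "k = k'") auto

lemma dpt_gt_a: "a < q \<Longrightarrow> a < dpt a q k"
  unfolding dpt_def by simp

lemma dpt_le_q: "a < q \<Longrightarrow> dpt a q k \<le> q"
  using dpt_mono[of a q 0 k] by simp

lemma dpt_rat: "a \<in> \<rat> \<Longrightarrow> q \<in> \<rat> \<Longrightarrow> dpt a q m \<in> \<rat>"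
  unfolding dpt_def by (intro Rats_add Rats_diff Rats_divide Rats_power) auto

lemma dpt_exists: assumes "a < q" "a < x" shows "\<exists>k. dpt a q k \<le> x"
proof -
  obtain k where k: "(q - a) / (x - a) < 2 ^ k" using real_arch_pow[of 2 "(q - a) / (x - a)"] by auto
  have "(q - a) < 2 ^ k * (x - a)" using k assms by (simp add: divide_less_eq mult.commute)
  then have "(q - a) / 2 ^ k < x - a" by (simp add: divide_less_eq mult.commute)
  then show ?thesis unfolding dpt_def by (intro exI[of _ k]) simp
qed

lemma dpt_unique_ex:
  assumes "a < q" "a < x" "x < q"
  shows "\<exists>!k. dpt a q (Suc k) \<le> x \<and> x < dpt a q k"
proof -
  obtain k0 where k0: "dpt a q k0 \<le> x" using dpt_exists assms by blast
  define k where "k = (LEAST k. dpt a q (Suc k) \<le> x)"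
  have ex: "dpt a q (Suc k0) \<le> x" using dpt_mono[OF assms(1), of k0 "Suc k0"] k0 by simp
  have K1: "dpt a q (Suc k) \<le> x" unfolding k_def by (rule LeastI[of _ k0]) (rule ex)
  have K2: "x < dpt a q k"
  proof (cases k)
    case 0 then show ?thesis using assms by simp
  next
    case (Suc l)
    then have "l < k" by simp
    then have "\<not> dpt a q (Suc l) \<le> x" unfolding k_def by (rule not_less_Least)
    then show ?thesis using Suc by simp
  qed
  show ?thesis
  proof (rule ex1I[of _ k])
    show "dpt a q (Suc k) \<le> x \<and> x < dpt a q k" using K1 K2 by simp
    fix k' assume k': "dpt a q (Suc k') \<le> x \<and> x < dpt a q k'"
    show "k' = k"
    proof (rule ccontr)
      assume "k' \<noteq> k"
      then have "k' < k \<or> k < k'" by arith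
      then show False
      proof
        assume "k' < k"
        then have "dpt a q k \<le> dpt a q (Suc k')" using dpt_mono[OF assms(1)] by simp
        with K2 k' show False by simp
      next
        assume "k < k'"
        then have "dpt a q k' \<le> dpt a q (Suc k)" using dpt_mono[OF assms(1)] by simp
        with K1 k' show False by simp
      qed
    qed
  qed
qed

section \<open>Staircase combinatorics\<close>

definition Pst :: "nat \<Rightarrow> (nat \<Rightarrow> nat) \<Rightarrow> nat \<Rightarrow> nat \<Rightarrow> bool" where
  "Pst r l m i \<longleftrightarrow> i < r \<and> (\<forall>t<r. (t < i \<longrightarrow> Suc m \<le> l t) \<and> (t = i \<longrightarrow> l t = m) \<and> (i < t \<longrightarrow> m \<le> l t))"

lemma Pst_unique:
  assumes "Pst r l m i" "Pst r l m' i'"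
  shows "m = m' \<and> i = i'"
proof -
  have gen: "(\<forall>t<r. m \<le> l t) \<and> i < r \<and> l i = m" if P: "Pst r l m i" for m i
  proof -
    have P1: "i < r" "\<forall>t<r. (t < i \<longrightarrow> Suc m \<le> l t) \<and> (t = i \<longrightarrow> l t = m) \<and> (i < t \<longrightarrow> m \<le> l t)"
      using P unfolding Pst_def by auto
    have "m \<le> l t" if "t < r" for t
      using P1(2) that less_linear[of t i] by fastforce
    then show ?thesis using P1 by auto
  qed
  have A: "\<forall>t<r. m \<le> l t" "i < r" "l i = m" using gen[OF assms(1)] by auto
  have B: "\<forall>t<r. m' \<le> l t" "i' < r" "l i' = m'" using gen[OF assms(2)] by auto
  have "m = m'" using A B by (metis le_antisym)
  moreover have "i = i'"
  proof (rule ccontr)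
    assume "i \<noteq> i'"
    then have "i < i' \<or> i' < i" by arith
    then show False
    proof
      assume "i < i'"
      then have "Suc m' \<le> l i" using assms(2) A(2) unfolding Pst_def by blast
      with A(3) \<open>m = m'\<close> show False by simp
    next
      assume "i' < i"
      then have "Suc m \<le> l i'" using assms(1) B(2) unfolding Pst_def by blast
      with B(3) \<open>m = m'\<close> show False by simp
    qed
  qed
  ultimately show ?thesis by simp
qed

lemma Pst_exists:
  assumes "0 < r"
  shows "\<exists>m i. Pst r l m i"
proof -
  define m where "m = Min (l ` {..<r})"
  have fin: "finite (l ` {..<r})" "l ` {..<r} \<noteq> {}" using assms by auto
  have mle: "m \<le> l t" if "t < r" for t unfolding m_def using fin that by simp
  obtain t0 where t0: "t0 < r" "l t0 = m" using Min_in[OF fin] unfolding m_def by auto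
  define i where "i = (LEAST t. t < r \<and> l t = m)"
  have i: "i < r \<and> l i = m" unfolding i_def by (rule LeastI[of _ t0]) (use t0 in simp)
  have "Suc m \<le> l t" if "t < i" for t
  proof -
    have "\<not> (t < r \<and> l t = m)" using that unfolding i_def by (rule not_less_Least)
    moreover have "t < r" using that i by simp
    ultimately show ?thesis using mle[of t] by simp
  qed
  then have "Pst r l m i" unfolding Pst_def using i mle by auto
  then show ?thesis by blast
qed

lemma Pst_ex1:
  assumes "0 < r"
  shows "\<exists>!k. Pst r l (k div r) (k mod r)"
proof -
  obtain m i where P: "Pst r l m i" using Pst_exists[OF assms] by blast
  then have ir: "i < r" unfolding Pst_def by simp
  show ?thesis
  proof (rule ex1I[of _ "m * r + i"])
    show "Pst r l ((m * r + i) div r) ((m * r + i) mod r)" using P ir by simp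
    fix k assume "Pst r l (k div r) (k mod r)"
    from Pst_unique[OF this P] have "k div r = m" "k mod r = i" by auto
    then show "k = m * r + i" by (metis div_mult_mod_eq)
  qed
qed




type_synonym stt = "(nat \<Rightarrow> real) \<times> (nat \<Rightarrow> real)"

definition Cnd :: "nat set \<Rightarrow> stt \<Rightarrow> (nat \<Rightarrow> real) \<Rightarrow> bool" where
  "Cnd J s x \<longleftrightarrow> (\<forall>j\<in>J. fst s j \<le> x j \<and> x j < snd s j)"

lemma Cnd_split:
  assumes "M \<subseteq> J" "\<And>t. t \<notin> M \<Longrightarrow> fst s' t = fst s t \<and> snd s' t = snd s t"
  shows "Cnd J s' x \<longleftrightarrow> Cnd (J - M) s x \<and> Cnd M s' x"
  using assms unfolding Cnd_def by auto

lemma Cnd_split0: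
  assumes "M \<subseteq> J"
  shows "Cnd J s x \<longleftrightarrow> Cnd (J - M) s x \<and> Cnd M s x"
  using Cnd_split[OF assms, of s s] by simp

definition Init :: "nat \<Rightarrow> nat \<Rightarrow> stt \<Rightarrow> stt" where
  "Init j k s = ((fst s)(j := real_of_int (int_decode k)), (snd s)(j := real_of_int (int_decode k) + 1))"

lemma Init_iff:
  assumes "j \<notin> J"
  shows "Cnd (insert j J) (Init j k s) x \<longleftrightarrow> Cnd J s x \<and> x j \<in> {real_of_int (int_decode k)..<real_of_int (int_decode k) + 1}"
  using assms unfolding Cnd_def Init_def by auto

lemma Init_ex1: "\<exists>!k. x j \<in> {real_of_int (int_decode k)..<real_of_int (int_decode k) + 1}"
proof (rule ex1I[of _ "int_encode \<lfloor>x j\<rfloor>"])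
  show "x j \<in> {real_of_int (int_decode (int_encode \<lfloor>x j\<rfloor>))..<real_of_int (int_decode (int_encode \<lfloor>x j\<rfloor>)) + 1}"
    by simp
  fix k assume "x j \<in> {real_of_int (int_decode k)..<real_of_int (int_decode k) + 1}"
  then have "\<lfloor>x j\<rfloor> = int_decode k" by (intro floor_unique) auto
  then have "int_decode k = \<lfloor>x j\<rfloor>" by simp
  then show "k = int_encode \<lfloor>x j\<rfloor>" by (metis int_decode_inverse)
qed

definition Sp1 :: "nat \<Rightarrow> nat \<Rightarrow> stt \<Rightarrow> stt" where
  "Sp1 j k s = ((fst s)(j := cpt (fst s j) (snd s j) k), (snd s)(j := cpt (fst s j) (snd s j) (Suc k)))"

lemma Sp1_iff:
  assumes "j \<in> J"
  shows "Cnd J (Sp1 j k s) x \<longleftrightarrow> Cnd (J - {j}) s x \<and> cpt (fst s j) (snd s j) k \<le> x j \<and> x j < cpt (fst s j) (snd s j) (Suc k)"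
  using assms unfolding Cnd_def Sp1_def by auto

lemma Sp1_back:
  assumes "j \<in> J" "fst s j < snd s j" "Cnd J (Sp1 j k s) x"
  shows "Cnd J s x"
proof -
  let ?a = "fst s j" and ?b = "snd s j"
  from assms(3) Sp1_iff[OF assms(1)] have h: "Cnd (J - {j}) s x" "cpt ?a ?b k \<le> x j" "x j < cpt ?a ?b (Suc k)" by auto
  have "?a \<le> x j" using h(2) cpt_ge_a[OF assms(2), of k] by linarith
  moreover have "x j < ?b" using h(3) cpt_less_b[OF assms(2), of "Suc k"] by linarith
  ultimately show ?thesis using h(1) Cnd_split0[of "{j}" J s x] assms(1) unfolding Cnd_def by auto
qed

lemma Sp1_ex1:
  assumes "j \<in> J" "fst s j < snd s j" "Cnd J s x"
  shows "\<exists>!k. Cnd J (Sp1 j k s) x"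
proof -
  let ?a = "fst s j" and ?b = "snd s j"
  have x: "?a \<le> x j" "x j < ?b" "Cnd (J - {j}) s x" using assms(1,3) unfolding Cnd_def by auto
  have "Cnd J (Sp1 j k s) x \<longleftrightarrow> k = lev ?a ?b (x j)" for k
    using Sp1_iff[OF assms(1)] x lev_props[OF assms(2) x(1,2)] by (auto simp: le_antisym)
  then show ?thesis by simp
qed

definition qpt :: "real \<Rightarrow> real \<Rightarrow> real \<Rightarrow> real" where
  "qpt a b q = (if a < q \<and> q < b then q else (a + b) / 2)"

lemma qpt: "a < b \<Longrightarrow> a < qpt a b q \<and> qpt a b q < b"
  unfolding qpt_def by auto

lemma qpt_rat: "a \<in> \<rat> \<Longrightarrow> b \<in> \<rat> \<Longrightarrow> q \<in> \<rat> \<Longrightarrow> qpt a b q \<in> \<rat>"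
  unfolding qpt_def by (auto intro!: Rats_divide Rats_add)

definition Sp2 :: "nat \<Rightarrow> real \<Rightarrow> nat \<Rightarrow> stt \<Rightarrow> stt" where
  "Sp2 j q k s = (let a = fst s j; b = snd s j; q' = qpt a b q in
     (case k of 0 \<Rightarrow> ((fst s)(j := q'), snd s)
      | Suc k' \<Rightarrow> ((fst s)(j := dpt a q' (Suc k')), (snd s)(j := dpt a q' k'))))"

lemma Sp2_fst: "fst (Sp2 j q k s) = (fst s)(j := (case k of 0 \<Rightarrow> qpt (fst s j) (snd s j) q | Suc k' \<Rightarrow> dpt (fst s j) (qpt (fst s j) (snd s j) q) (Suc k')))"
  unfolding Sp2_def Let_def by (cases k) auto

lemma Sp2_snd: "snd (Sp2 j q k s) = (snd s)(j := (case k of 0 \<Rightarrow> snd s j | Suc k' \<Rightarrow> dpt (fst s j) (qpt (fst s j) (snd s j) q) k'))"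
  unfolding Sp2_def Let_def by (cases k) auto

lemma Sp2_iff:
  assumes "j \<in> J"
  shows "Cnd J (Sp2 j q k s) x \<longleftrightarrow> Cnd (J - {j}) s x \<and> fst (Sp2 j q k s) j \<le> x j \<and> x j < snd (Sp2 j q k s) j"
  using assms unfolding Cnd_def by (auto simp: Sp2_fst Sp2_snd)

lemma Sp2_bounds:
  assumes "fst s j < snd s j"
  shows "fst s j < fst (Sp2 j q k s) j \<and> fst (Sp2 j q k s) j < snd (Sp2 j q k s) j \<and> snd (Sp2 j q k s) j \<le> snd s j"
proof -
  let ?a = "fst s j" and ?b = "snd s j" 
  let ?q = "qpt ?a ?b q"
  have q: "?a < ?q" "?q < ?b" using qpt[OF assms] by auto
  show ?thesis
  proof (cases k)
    case 0 then show ?thesis using q by (simp add: Sp2_fst Sp2_snd)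
  next
    case (Suc k')
    then show ?thesis using q dpt_gt_a[OF q(1)] dpt_Suc_less[OF q(1), of k'] dpt_le_q[OF q(1), of k']
      by (simp add: Sp2_fst Sp2_snd)
  qed
qed

lemma Sp2_back:
  assumes "j \<in> J" "fst s j < snd s j" "Cnd J (Sp2 j q k s) x"
  shows "Cnd J s x"
proof -
  from assms(3) Sp2_iff[OF assms(1)] have h: "Cnd (J - {j}) s x" "fst (Sp2 j q k s) j \<le> x j" "x j < snd (Sp2 j q k s) j" by auto
  with Sp2_bounds[OF assms(2), of q k] have "fst s j \<le> x j" "x j < snd s j" by linarith+
  then show ?thesis using h(1) assms(1) unfolding Cnd_def by auto
qed

lemma Sp2_ex1:
  assumes "j \<in> J" "fst s j < snd s j" "Cnd J s x" "x j \<noteq> fst s j"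
  shows "\<exists>!k. Cnd J (Sp2 j q k s) x"
proof -
  let ?a = "fst s j" and ?b = "snd s j" 
  let ?q = "qpt ?a ?b q"
  have q: "?a < ?q" "?q < ?b" using qpt[OF assms(2)] by auto
  have x: "?a < x j" "x j < ?b" "Cnd (J - {j}) s x" using assms(1,3,4) unfolding Cnd_def by force+
  have iff: "Cnd J (Sp2 j q k s) x \<longleftrightarrow> (case k of 0 \<Rightarrow> ?q \<le> x j | Suc k' \<Rightarrow> dpt ?a ?q (Suc k') \<le> x j \<and> x j < dpt ?a ?q k')" for k
    using Sp2_iff[OF assms(1)] x by (cases k) (auto simp: Sp2_fst Sp2_snd)
  show ?thesis
  proof (cases "?q \<le> x j")
    case True
    show ?thesis
    proof (rule ex1I[of _ 0])
      show "Cnd J (Sp2 j q 0 s) x" using iff True by simp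
      fix k assume C: "Cnd J (Sp2 j q k s) x"
      show "k = 0"
      proof (cases k)
        case (Suc k')
        with C iff[of k] have "x j < dpt ?a ?q k'" by simp
        with dpt_le_q[OF q(1), of k'] True show ?thesis by simp
      qed
    qed
  next
    case False
    then obtain k' where k': "dpt ?a ?q (Suc k') \<le> x j \<and> x j < dpt ?a ?q k'"
      "\<And>k''. dpt ?a ?q (Suc k'') \<le> x j \<and> x j < dpt ?a ?q k'' \<Longrightarrow> k'' = k'"
      using dpt_unique_ex[OF q(1) x(1)] by force
    show ?thesis
    proof (rule ex1I[of _ "Suc k'"])
      show "Cnd J (Sp2 j q (Suc k') s) x" using iff[of "Suc k'"] k'(1) by simp
      fix k assume C: "Cnd J (Sp2 j q k s) x"
      show "k = Suc k'"
      proof (cases k)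
        case 0
        with C iff[of k] have "?q \<le> x j" by simp
        with False show ?thesis by simp
      next
        case (Suc k'')
        with C iff[of k] have "dpt ?a ?q (Suc k'') \<le> x j \<and> x j < dpt ?a ?q k''" by simp
        then have "k'' = k'" by (rule k'(2))
        then show ?thesis using Suc by simp
      qed
    qed
  qed
qed

lemma Sp2_avoid:
  assumes "fst s j < snd s j"
  shows "q \<le> fst (Sp2 j q k s) j \<or> snd (Sp2 j q k s) j \<le> q"
proof -
  let ?a = "fst s j" and ?b = "snd s j" 
  let ?q = "qpt ?a ?b q"
  have q: "?a < ?q" "?q < ?b" using qpt[OF assms] by auto
  show ?thesis
  proof (cases "?a < q \<and> q < ?b")
    case True
    then have "?q = q" by (simp add: qpt_def)
    then show ?thesis using dpt_le_q[OF q(1)] by (cases k) (auto simp: Sp2_fst Sp2_snd)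
  next
    case False
    then have "q \<le> ?a \<or> ?b \<le> q" by auto
    then show ?thesis using Sp2_bounds[OF assms, of q k] by auto
  qed
qed

definition Stair :: "nat \<Rightarrow> nat \<Rightarrow> stt \<Rightarrow> stt" where
  "Stair r k s = (let m = k div r; i = k mod r in
     ((\<lambda>t. if t < r then (if t < i then cpt (fst s t) (snd s t) (Suc m) else cpt (fst s t) (snd s t) m) else fst s t),
      (\<lambda>t. if t = i then cpt (fst s t) (snd s t) (Suc m) else snd s t)))"

lemma Stair_iff:
  assumes "{..<r} \<subseteq> J" "0 < r"
  shows "Cnd J (Stair r k s) x \<longleftrightarrow> Cnd (J - {..<r}) s x \<and> Cnd {..<r} (Stair r k s) x"
  by (rule Cnd_split[OF assms(1)]) (use assms(2) in \<open>auto simp: Stair_def Let_def\<close>)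

lemma Stair_bounds:
  assumes "0 < r" "\<forall>t<r. fst s t < snd s t" "t < r"
  shows "fst s t \<le> fst (Stair r k s) t \<and> fst (Stair r k s) t < snd (Stair r k s) t \<and> snd (Stair r k s) t \<le> snd s t"
proof -
  have ab: "fst s t < snd s t" using assms by auto
  note c = cpt_ge_a[OF ab] cpt_less_b[OF ab] cpt_Suc_less[OF ab]
  show ?thesis unfolding Stair_def Let_def using c assms(3)
    by (auto simp: less_imp_le)
qed

lemma Stair_back:
  assumes "{..<r} \<subseteq> J" "0 < r" "\<forall>t<r. fst s t < snd s t" "Cnd J (Stair r k s) x"
  shows "Cnd J s x"
proof -
  from assms(4) Stair_iff[OF assms(1,2), of k s x] have h: "Cnd (J - {..<r}) s x" "Cnd {..<r} (Stair r k s) x" by blast+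
  have "Cnd {..<r} s x" unfolding Cnd_def
  proof
    fix t assume "t \<in> {..<r}"
    with h(2) have "fst (Stair r k s) t \<le> x t \<and> x t < snd (Stair r k s) t" unfolding Cnd_def by blast
    with Stair_bounds[OF assms(2,3), of t k] \<open>t \<in> {..<r}\<close> show "fst s t \<le> x t \<and> x t < snd s t" by force
  qed
  with h(1) show ?thesis using Cnd_split0[OF assms(1)] by blast
qed

lemma Stair_ex1:
  assumes "{..<r} \<subseteq> J" "0 < r" "\<forall>t<r. fst s t < snd s t" "Cnd J s x"
  shows "\<exists>!k. Cnd J (Stair r k s) x"
proof -
  define l where "l t = lev (fst s t) (snd s t) (x t)" for t
  have x: "fst s t \<le> x t \<and> x t < snd s t" if "t < r" for t using assms(1,4) that unfolding Cnd_def by auto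
  have J: "Cnd (J - {..<r}) s x" using assms(4) unfolding Cnd_def by auto
  have key: "Cnd {..<r} (Stair r k s) x \<longleftrightarrow> Pst r l (k div r) (k mod r)" for k
  proof -
    have lp: "(cpt (fst s t) (snd s t) m \<le> x t \<longleftrightarrow> m \<le> l t) \<and> (x t < cpt (fst s t) (snd s t) (Suc m) \<longleftrightarrow> l t \<le> m)"
      if "t < r" for t m
      using lev_props[of "fst s t" "snd s t" "x t" m] assms(3) x[OF that] that unfolding l_def by auto
    have ir: "k mod r < r" using assms(2) by simp
    show ?thesis unfolding Cnd_def Pst_def Stair_def Let_def using lp x ir
      by (auto simp: le_antisym)
  qed
  have "Cnd J (Stair r k s) x \<longleftrightarrow> Pst r l (k div r) (k mod r)" for k
    using Stair_iff[OF assms(1,2), of k s x] key[of k] J by blast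
  then show ?thesis using Pst_ex1[OF assms(2), of l] by simp
qed




locale PT =
  fixes irr :: bool and I :: "nat set"
  assumes I_cases: "I = UNIV \<or> (\<exists>n\<ge>1. I = {..<n})"
begin

definition Ls :: "real set" where "Ls = (if irr then - \<rat> else UNIV)"
definition YY :: "real topology" where "YY = subtopology sorgenfrey_line Ls"
definition XX :: "(nat \<Rightarrow> real) topology" where "XX = product_topology (\<lambda>_. YY) I"
definition JJ :: "nat \<Rightarrow> nat set" where "JJ n = {j \<in> I. 4 * j < n}"
definition rr :: "nat \<Rightarrow> nat" where "rr e = card (I \<inter> {..e})"
definition co :: "nat \<Rightarrow> nat" where
  "co e = (if fst (prod_decode e) \<in> I then fst (prod_decode e) else 0)"
definition qq :: "nat \<Rightarrow> real" where "qq k = of_rat (from_nat k)"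

definition stp :: "nat \<Rightarrow> stt \<Rightarrow> nat \<Rightarrow> stt" where
  "stp n s k = (if n mod 4 = 0 then (if n div 4 \<in> I then Init (n div 4) k s else Sp1 0 k s)
     else if n mod 4 = 1 then Sp1 (co (n div 4)) k s
     else if n mod 4 = 2 then (if irr then Sp2 (co (n div 4)) (qq (snd (prod_decode (n div 4)))) k s
                               else Sp1 (co (n div 4)) k s)
     else Stair (rr (n div 4)) k s)"

fun SS :: "(nat \<Rightarrow> nat) \<Rightarrow> nat \<Rightarrow> stt" where
  "SS f 0 = (\<lambda>_. 0, \<lambda>_. 0)"
| "SS f (Suc n) = stp n (SS f n) (f n)"

definition bx :: "nat \<Rightarrow> stt \<Rightarrow> (nat \<Rightarrow> real) set" where
  "bx n s = PiE I (\<lambda>j. if j \<in> JJ n then {fst s j ..< snd s j} \<inter> Ls else Ls)"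

definition FF :: "nat list \<Rightarrow> (nat \<Rightarrow> real) set" where
  "FF v = bx (length v) (SS (nth v) (length v))"

definition good :: "nat \<Rightarrow> stt \<Rightarrow> bool" where
  "good n s \<longleftrightarrow> (\<forall>j\<in>JJ n. fst s j < snd s j \<and> (irr \<longrightarrow> fst s j \<in> \<rat> \<and> snd s j \<in> \<rat>))"

lemma zero_I: "0 \<in> I"
  using I_cases by auto

lemma rr_eq: "I \<inter> {..e} = {..<rr e} \<and> 0 < rr e"
  using I_cases
proof
  assume "I = UNIV"
  moreover have "{..e} = {..<Suc e}" by auto
  ultimately show ?thesis unfolding rr_def by simp
next
  assume "\<exists>n\<ge>1. I = {..<n}"
  then obtain n where n: "n \<ge> 1" "I = {..<n}" by blast
  have "{..<n} \<inter> {..e} = {..<min n (Suc e)}" by auto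
  then show ?thesis unfolding rr_def using n by simp
qed

lemma co_props: "co e \<in> I \<and> co e \<le> e"
proof -
  have "fst (prod_decode e) \<le> prod_encode (fst (prod_decode e), snd (prod_decode e))"
    by (rule le_prod_encode_1)
  then have "fst (prod_decode e) \<le> e" by simp
  then show ?thesis unfolding co_def using zero_I by auto
qed

lemma co_enc: "j \<in> I \<Longrightarrow> co (prod_encode (j, k)) = j"
  unfolding co_def by simp

lemma qq_rat: "qq k \<in> \<rat>"
  unfolding qq_def by simp

lemma qq_surj: assumes "q \<in> \<rat>" shows "\<exists>k. qq k = q"
proof -
  from assms obtain r where "q = of_rat r" by (rule Rats_cases)
  then show ?thesis unfolding qq_def by (intro exI[of _ "to_nat r"]) simp
qed

lemma topspace_YY: "topspace YY = Ls"
  unfolding YY_def by simp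

lemma topspace_XX: "topspace XX = PiE I (\<lambda>_. Ls)"
  unfolding XX_def by (simp add: topspace_YY)

lemma JJ_sub: "JJ n \<subseteq> I" unfolding JJ_def by auto

lemma JJ_fin: "finite (JJ n)"
  by (rule finite_subset[of _ "{..<n}"]) (auto simp: JJ_def)

lemma JJ_iff: "j \<in> JJ n \<longleftrightarrow> j \<in> I \<and> 4 * j < n" unfolding JJ_def by simp

lemma bx_iff: "x \<in> bx n s \<longleftrightarrow> x \<in> PiE I (\<lambda>_. Ls) \<and> Cnd (JJ n) s x"
  unfolding bx_def Cnd_def PiE_iff JJ_def by auto

lemma JJ_0 [simp]: "JJ 0 = {}" unfolding JJ_def by simp

lemma phase_cases:
  fixes n :: nat
  obtains (P0) e where "n = 4 * e" | (P1) e where "n = 4 * e + 1" | (P2) e where "n = 4 * e + 2"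
    | (P3) e where "n = 4 * e + 3"
proof -
  have eq: "n = 4 * (n div 4) + n mod 4" by simp
  have "n mod 4 < 4" by simp
  then consider "n mod 4 = 0" | "n mod 4 = 1" | "n mod 4 = 2" | "n mod 4 = 3" by linarith
  then show ?thesis
  proof cases
    case 1 then show ?thesis using that(1)[of "n div 4"] eq by simp
  next
    case 2 then show ?thesis using that(2)[of "n div 4"] eq by simp
  next
    case 3 then show ?thesis using that(3)[of "n div 4"] eq by simp
  next
    case 4 then show ?thesis using that(4)[of "n div 4"] eq by simp
  qed
qed

lemma stp_P0: "stp (4 * e) s k = (if e \<in> I then Init e k s else Sp1 0 k s)"
  unfolding stp_def by simp
lemma stp_P1: "stp (4 * e + 1) s k = Sp1 (co e) k s"
proof -
  have "(4 * e + 1) div 4 = e" "(4 * e + 1) mod 4 = 1" by presburger+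
  then show ?thesis unfolding stp_def by simp
qed
lemma stp_P2: "stp (4 * e + 2) s k = (if irr then Sp2 (co e) (qq (snd (prod_decode e))) k s else Sp1 (co e) k s)"
proof -
  have "(4 * e + 2) div 4 = e" "(4 * e + 2) mod 4 = 2" by presburger+
  then show ?thesis unfolding stp_def by simp
qed
lemma stp_P3: "stp (4 * e + 3) s k = Stair (rr e) k s"
proof -
  have "(4 * e + 3) div 4 = e" "(4 * e + 3) mod 4 = 3" by presburger+
  then show ?thesis unfolding stp_def by simp
qed

lemma JJ_P0: "JJ (Suc (4 * e)) = (if e \<in> I then insert e (JJ (4 * e)) else JJ (4 * e))"
  unfolding JJ_def by (auto simp: less_Suc_eq)
lemma JJ_P0': "e \<notin> JJ (4 * e)" unfolding JJ_def by auto
lemma JJ_P1: "JJ (Suc (4 * e + 1)) = JJ (4 * e + 1)" unfolding JJ_def by (auto; presburger)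
lemma JJ_P2: "JJ (Suc (4 * e + 2)) = JJ (4 * e + 2)" unfolding JJ_def by (auto; presburger)
lemma JJ_P3: "JJ (Suc (4 * e + 3)) = JJ (4 * e + 3)" unfolding JJ_def by (auto; presburger)

lemma zero_JJ_P0: "e \<notin> I \<Longrightarrow> 0 \<in> JJ (4 * e)"
  using zero_I unfolding JJ_def by (cases e) auto
lemma co_JJ_P1: "co e \<in> JJ (4 * e + 1)" using co_props[of e] unfolding JJ_def by auto
lemma co_JJ_P2: "co e \<in> JJ (4 * e + 2)" using co_props[of e] unfolding JJ_def by auto
lemma rr_JJ_P3: "{..<rr e} \<subseteq> JJ (4 * e + 3)"
proof
  fix t assume "t \<in> {..<rr e}"
  then have "t \<in> I \<inter> {..e}" using rr_eq[of e] by blast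
  then show "t \<in> JJ (4 * e + 3)" unfolding JJ_def by auto
qed

end




context PT
begin

lemma good_rat: "good n s \<Longrightarrow> irr \<Longrightarrow> j \<in> JJ n \<Longrightarrow> fst s j \<in> \<rat> \<and> snd s j \<in> \<rat>"
  unfolding good_def by blast

lemma good_lt: "good n s \<Longrightarrow> j \<in> JJ n \<Longrightarrow> fst s j < snd s j"
  unfolding good_def by blast

lemma good_step:
  assumes "good n s" shows "good (Suc n) (stp n s k)"
  using phase_cases[of n]
proof cases
  case (P0 e)
  show ?thesis
  proof (cases "e \<in> I")
    case True
    show ?thesis unfolding good_def P0 JJ_P0 stp_P0 using True
    proof (simp only: if_True, intro ballI)
      fix j assume "j \<in> insert e (JJ (4 * e))"
      then show "fst (Init e k s) j < snd (Init e k s) j \<and> (irr \<longrightarrow> fst (Init e k s) j \<in> \<rat> \<and> snd (Init e k s) j \<in> \<rat>)"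
        using assms JJ_P0'[of e] unfolding P0 good_def Init_def by (cases "j = e") auto
    qed
  next
    case False
    have z: "0 \<in> JJ (4 * e)" using zero_JJ_P0[OF False] .
    show ?thesis unfolding good_def P0 JJ_P0 stp_P0 using False
    proof (simp only: if_False, intro ballI)
      fix j assume j: "j \<in> JJ (4 * e)"
      have ab: "fst s 0 < snd s 0" using assms z unfolding P0 good_def by blast
      show "fst (Sp1 0 k s) j < snd (Sp1 0 k s) j \<and> (irr \<longrightarrow> fst (Sp1 0 k s) j \<in> \<rat> \<and> snd (Sp1 0 k s) j \<in> \<rat>)"
        using assms j z cpt_Suc_less[OF ab, of k] unfolding P0 good_def Sp1_def
        by (cases "j = 0") (auto intro: cpt_rat)
    qed
  qed
next
  case (P1 e)
  have z: "co e \<in> JJ (4 * e + 1)" by (rule co_JJ_P1)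
  show ?thesis unfolding good_def P1 JJ_P1 stp_P1
  proof (intro ballI)
    fix j assume j: "j \<in> JJ (4 * e + 1)"
    have ab: "fst s (co e) < snd s (co e)" using assms z unfolding P1 good_def by blast
    show "fst (Sp1 (co e) k s) j < snd (Sp1 (co e) k s) j \<and> (irr \<longrightarrow> fst (Sp1 (co e) k s) j \<in> \<rat> \<and> snd (Sp1 (co e) k s) j \<in> \<rat>)"
      using assms j z cpt_Suc_less[OF ab, of k] unfolding P1 good_def Sp1_def
      by (cases "j = co e") (auto intro: cpt_rat)
  qed
next
  case (P2 e)
  have z: "co e \<in> JJ (4 * e + 2)" by (rule co_JJ_P2)
  have ab: "fst s (co e) < snd s (co e)" using assms z unfolding P2 good_def by blast
  show ?thesis
  proof (cases irr)
    case False
    have st: "stp (4 * e + 2) s k = Sp1 (co e) k s" unfolding stp_P2 using False by simp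
    show ?thesis unfolding good_def P2 JJ_P2 st
    proof (intro ballI)
      fix j assume j: "j \<in> JJ (4 * e + 2)"
      show "fst (Sp1 (co e) k s) j < snd (Sp1 (co e) k s) j \<and> (irr \<longrightarrow> fst (Sp1 (co e) k s) j \<in> \<rat> \<and> snd (Sp1 (co e) k s) j \<in> \<rat>)"
        using assms j z cpt_Suc_less[OF ab, of k] False unfolding P2 good_def Sp1_def
        by (cases "j = co e") auto
    qed
  next
    case True
    let ?q = "qq (snd (prod_decode e))"
    have st: "stp (4 * e + 2) s k = Sp2 (co e) ?q k s" unfolding stp_P2 using True by simp
    show ?thesis unfolding good_def P2 JJ_P2 st
    proof (intro ballI)
      fix j assume j: "j \<in> JJ (4 * e + 2)"
      have r: "fst s (co e) \<in> \<rat>" "snd s (co e) \<in> \<rat>" using assms z True unfolding P2 good_def by blast+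
      have qr: "qpt (fst s (co e)) (snd s (co e)) ?q \<in> \<rat>" using r qq_rat by (intro qpt_rat)
      have B: "fst (Sp2 (co e) ?q k s) (co e) < snd (Sp2 (co e) ?q k s) (co e)"
        using Sp2_bounds[OF ab, of ?q k] by simp
      have R: "fst (Sp2 (co e) ?q k s) (co e) \<in> \<rat> \<and> snd (Sp2 (co e) ?q k s) (co e) \<in> \<rat>"
        using r qr by (cases k) (auto simp: Sp2_fst Sp2_snd intro: dpt_rat)
      show "fst (Sp2 (co e) ?q k s) j < snd (Sp2 (co e) ?q k s) j \<and> (irr \<longrightarrow> fst (Sp2 (co e) ?q k s) j \<in> \<rat> \<and> snd (Sp2 (co e) ?q k s) j \<in> \<rat>)"
      proof (cases "j = co e")
        case True then show ?thesis using B R by blast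
      next
        case False then show ?thesis using assms j unfolding P2 good_def by (simp add: Sp2_fst Sp2_snd)
      qed
    qed
  qed
next
  case (P3 e)
  let ?r = "rr e"
  have sub: "{..<?r} \<subseteq> JJ (4 * e + 3)" by (rule rr_JJ_P3)
  have rpos: "0 < ?r" using rr_eq by blast
  have ab: "\<forall>t<?r. fst s t < snd s t" using assms sub unfolding P3 good_def by blast
  show ?thesis unfolding good_def P3 JJ_P3 stp_P3
  proof (intro ballI)
    fix j assume j: "j \<in> JJ (4 * e + 3)"
    show "fst (Stair ?r k s) j < snd (Stair ?r k s) j \<and> (irr \<longrightarrow> fst (Stair ?r k s) j \<in> \<rat> \<and> snd (Stair ?r k s) j \<in> \<rat>)"
    proof (cases "j < ?r")
      case True
      have b: "fst (Stair ?r k s) j < snd (Stair ?r k s) j" using Stair_bounds[OF rpos ab True] by blast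
      have "irr \<longrightarrow> fst s j \<in> \<rat> \<and> snd s j \<in> \<rat>" using assms j unfolding P3 good_def by blast
      then have "irr \<longrightarrow> fst (Stair ?r k s) j \<in> \<rat> \<and> snd (Stair ?r k s) j \<in> \<rat>"
        unfolding Stair_def Let_def by (auto intro: cpt_rat)
      with b show ?thesis by blast
    next
      case False
      have "k mod ?r < ?r" using rpos by simp
      then have "fst (Stair ?r k s) j = fst s j" "snd (Stair ?r k s) j = snd s j"
        using False unfolding Stair_def Let_def by auto
      then show ?thesis using assms j unfolding P3 good_def by simp
    qed
  qed
qed

lemma good_SS: "good n (SS f n)"
proof (induction n)
  case 0 show ?case by (simp add: good_def)
next
  case (Suc n) then show ?case by (simp add: good_step)
qed

lemma step_mono:
  assumes "good n s" "j \<in> JJ n"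
  shows "fst s j \<le> fst (stp n s k) j \<and> snd (stp n s k) j \<le> snd s j"
  using phase_cases[of n]
proof cases
  case (P0 e)
  show ?thesis
  proof (cases "e \<in> I")
    case True
    have "j \<noteq> e" using assms(2) JJ_P0'[of e] P0 by auto
    then show ?thesis using True unfolding P0 stp_P0 Init_def by simp
  next
    case False
    have ab: "fst s j < snd s j" using good_lt[OF assms] .
    show ?thesis using False unfolding P0 stp_P0 Sp1_def
      using cpt_ge_a[OF ab, of k] cpt_less_b[OF ab, of "Suc k"] by (cases "j = 0") auto
  qed
next
  case (P1 e)
  have ab: "fst s j < snd s j" using good_lt[OF assms] .
  show ?thesis unfolding P1 stp_P1 Sp1_def
    using cpt_ge_a[OF ab, of k] cpt_less_b[OF ab, of "Suc k"] by (cases "j = co e") auto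
next
  case (P2 e)
  have ab: "fst s j < snd s j" using good_lt[OF assms] .
  show ?thesis
  proof (cases irr)
    case False
    then show ?thesis unfolding P2 stp_P2 Sp1_def
      using cpt_ge_a[OF ab, of k] cpt_less_b[OF ab, of "Suc k"] by (cases "j = co e") auto
  next
    case True
    show ?thesis using True unfolding P2 stp_P2
      using Sp2_bounds[OF ab, of "qq (snd (prod_decode e))" k]
      by (cases "j = co e") (auto simp: Sp2_fst Sp2_snd)
  qed
next
  case (P3 e)
  let ?r = "rr e"
  have sub: "{..<?r} \<subseteq> JJ (4 * e + 3)" by (rule rr_JJ_P3)
  have rpos: "0 < ?r" using rr_eq by blast
  have ab: "\<forall>t<?r. fst s t < snd s t" using assms(1) sub unfolding P3 good_def by blast
  show ?thesis
  proof (cases "j < ?r")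
    case True
    then show ?thesis unfolding P3 stp_P3 using Stair_bounds[OF rpos ab True, of k] by simp
  next
    case False
    have "k mod ?r < ?r" using rpos by simp
    then show ?thesis using False unfolding P3 stp_P3 Stair_def Let_def by auto
  qed
qed

lemma step_back:
  assumes "good n s" "Cnd (JJ (Suc n)) (stp n s k) x"
  shows "Cnd (JJ n) s x"
  using phase_cases[of n]
proof cases
  case (P0 e)
  show ?thesis
  proof (cases "e \<in> I")
    case True
    then show ?thesis using assms(2) Init_iff[OF JJ_P0'[of e]] unfolding P0 JJ_P0 stp_P0 by simp
  next
    case False
    have z: "0 \<in> JJ (4 * e)" using zero_JJ_P0[OF False] .
    show ?thesis using False assms(2) Sp1_back[OF z good_lt[OF assms(1)[unfolded P0] z]]
      unfolding P0 JJ_P0 stp_P0 by simp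
  qed
next
  case (P1 e)
  show ?thesis using assms(2) Sp1_back[OF co_JJ_P1 good_lt[OF assms(1)[unfolded P1] co_JJ_P1]]
    unfolding P1 JJ_P1 stp_P1 by simp
next
  case (P2 e)
  show ?thesis
  proof (cases irr)
    case False
    then show ?thesis using assms(2) Sp1_back[OF co_JJ_P2 good_lt[OF assms(1)[unfolded P2] co_JJ_P2]]
      unfolding P2 JJ_P2 stp_P2 by simp
  next
    case True
    then show ?thesis using assms(2) Sp2_back[OF co_JJ_P2 good_lt[OF assms(1)[unfolded P2] co_JJ_P2]]
      unfolding P2 JJ_P2 stp_P2 by simp
  qed
next
  case (P3 e)
  have sub: "{..<rr e} \<subseteq> JJ (4 * e + 3)" by (rule rr_JJ_P3)
  have rpos: "0 < rr e" using rr_eq by blast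
  have ab: "\<forall>t<rr e. fst s t < snd s t" using assms(1) sub unfolding P3 good_def by blast
  show ?thesis using assms(2) Stair_back[OF sub rpos ab] unfolding P3 JJ_P3 stp_P3 by simp
qed

lemma step_ex1:
  assumes "good n s" "x \<in> PiE I (\<lambda>_. Ls)" "Cnd (JJ n) s x"
  shows "\<exists>!k. Cnd (JJ (Suc n)) (stp n s k) x"
  using phase_cases[of n]
proof cases
  case (P0 e)
  show ?thesis
  proof (cases "e \<in> I")
    case True
    show ?thesis unfolding P0 JJ_P0 stp_P0 using True assms(3) Init_iff[OF JJ_P0'[of e]] Init_ex1[of x e]
      unfolding P0 by simp
  next
    case False
    have z: "0 \<in> JJ (4 * e)" using zero_JJ_P0[OF False] .
    show ?thesis using False Sp1_ex1[OF z good_lt[OF assms(1)[unfolded P0] z] assms(3)[unfolded P0]]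
      unfolding P0 JJ_P0 stp_P0 by simp
  qed
next
  case (P1 e)
  show ?thesis using Sp1_ex1[OF co_JJ_P1 good_lt[OF assms(1)[unfolded P1] co_JJ_P1] assms(3)[unfolded P1]]
    unfolding P1 JJ_P1 stp_P1 by simp
next
  case (P2 e)
  show ?thesis
  proof (cases irr)
    case False
    then show ?thesis using Sp1_ex1[OF co_JJ_P2 good_lt[OF assms(1)[unfolded P2] co_JJ_P2] assms(3)[unfolded P2]]
      unfolding P2 JJ_P2 stp_P2 by simp
  next
    case True
    have "co e \<in> I" using co_props by blast
    then have "x (co e) \<in> Ls" using assms(2) by auto
    then have "x (co e) \<notin> \<rat>" using True unfolding Ls_def by simp
    moreover have "fst s (co e) \<in> \<rat>" using good_rat[OF assms(1)[unfolded P2] True co_JJ_P2] by blast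
    ultimately have ne: "x (co e) \<noteq> fst s (co e)" by auto
    show ?thesis using True Sp2_ex1[OF co_JJ_P2 good_lt[OF assms(1)[unfolded P2] co_JJ_P2] assms(3)[unfolded P2] ne]
      unfolding P2 JJ_P2 stp_P2 by simp
  qed
next
  case (P3 e)
  have sub: "{..<rr e} \<subseteq> JJ (4 * e + 3)" by (rule rr_JJ_P3)
  have rpos: "0 < rr e" using rr_eq by blast
  have ab: "\<forall>t<rr e. fst s t < snd s t" using assms(1) sub unfolding P3 good_def by blast
  show ?thesis using Stair_ex1[OF sub rpos ab assms(3)[unfolded P3]] unfolding P3 JJ_P3 stp_P3 by simp
qed

end




context PT
begin

subsection \<open>Tree structure\<close>

lemma SS_cong: "(\<And>i. i < n \<Longrightarrow> f i = g i) \<Longrightarrow> SS f n = SS g n"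
  by (induction n) auto

lemma FF_path: "FF (path f n) = bx n (SS f n)"
proof -
  have "SS (nth (path f n)) n = SS f n" by (rule SS_cong) (simp add: path_def)
  then show ?thesis unfolding FF_def by (simp add: path_def)
qed

lemma FF_snoc: "FF (v @ [k]) = bx (Suc (length v)) (stp (length v) (SS (nth v) (length v)) k)"
proof -
  have "SS (nth (v @ [k])) (length v) = SS (nth v) (length v)" by (rule SS_cong) (simp add: nth_append)
  then show ?thesis unfolding FF_def by simp
qed

lemma sons_eq: "sons v = range (\<lambda>k. v @ [k])"
  unfolding sons_def by auto

lemma FF_sub: "FF v \<subseteq> PiE I (\<lambda>_. Ls)"
  unfolding FF_def using bx_iff by blast

lemma FF_split:
  "FF v = (\<Union>k. FF (v @ [k])) \<and> (\<forall>k k'. k \<noteq> k' \<longrightarrow> FF (v @ [k]) \<inter> FF (v @ [k']) = {})"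
proof -
  let ?n = "length v" 
  let ?s = "SS (nth v) ?n"
  have g: "good ?n ?s" by (rule good_SS)
  have FFv: "FF v = bx ?n ?s" unfolding FF_def by simp
  have A: "FF v \<subseteq> (\<Union>k. FF (v @ [k]))"
  proof
    fix x assume "x \<in> FF v"
    then have x: "x \<in> PiE I (\<lambda>_. Ls)" "Cnd (JJ ?n) ?s x" using FFv bx_iff by auto
    obtain k where "Cnd (JJ (Suc ?n)) (stp ?n ?s k) x" using step_ex1[OF g x] by blast
    then have "x \<in> FF (v @ [k])" using x(1) FF_snoc bx_iff by simp
    then show "x \<in> (\<Union>k. FF (v @ [k]))" by blast
  qed
  have B: "(\<Union>k. FF (v @ [k])) \<subseteq> FF v"
  proof
    fix x assume "x \<in> (\<Union>k. FF (v @ [k]))"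
    then obtain k where "x \<in> FF (v @ [k])" by blast
    then have x: "x \<in> PiE I (\<lambda>_. Ls)" "Cnd (JJ (Suc ?n)) (stp ?n ?s k) x" using FF_snoc bx_iff by auto
    have "Cnd (JJ ?n) ?s x" by (rule step_back[OF g x(2)])
    then show "x \<in> FF v" using x(1) FFv bx_iff by simp
  qed
  have C: "FF (v @ [k]) \<inter> FF (v @ [k']) = {}" if "k \<noteq> k'" for k k'
  proof (rule ccontr)
    assume "FF (v @ [k]) \<inter> FF (v @ [k']) \<noteq> {}"
    then obtain x where "x \<in> FF (v @ [k])" "x \<in> FF (v @ [k'])" by blast
    then have x: "x \<in> PiE I (\<lambda>_. Ls)" "Cnd (JJ (Suc ?n)) (stp ?n ?s k) x" "Cnd (JJ (Suc ?n)) (stp ?n ?s k') x"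
      using FF_snoc bx_iff by auto
    have "Cnd (JJ ?n) ?s x" by (rule step_back[OF g x(2)])
    from step_ex1[OF g x(1) this] x(2,3) have "k = k'" by blast
    with that show False by simp
  qed
  from A B C show ?thesis by blast
qed

lemma FF_locally_strict: "locally_strict FF"
  unfolding locally_strict_def
proof (intro allI impI conjI)
  fix v
  show "FF v = (\<Union>s\<in>sons v. FF s)" using FF_split[of v] unfolding sons_eq by auto
  show "disjoint_family_on FF (sons v)"
    unfolding disjoint_family_on_def sons_eq using FF_split[of v] by auto
qed

lemma FF_open: "open_foliage XX FF"
  unfolding open_foliage_def
proof
  fix v
  let ?n = "length v" and ?s = "SS (nth v) (length v)"
  have "openin XX (PiE I (\<lambda>j. if j \<in> JJ ?n then {fst ?s j ..< snd ?s j} \<inter> Ls else Ls))"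
    unfolding XX_def openin_PiE_gen
  proof (rule disjI2, rule conjI)
    show "finite {i \<in> I. (if i \<in> JJ ?n then {fst ?s i..<snd ?s i} \<inter> Ls else Ls) \<noteq> topspace YY}"
      by (rule finite_subset[OF _ JJ_fin[of ?n]]) (auto simp: topspace_YY)
    show "\<forall>i\<in>I. openin YY (if i \<in> JJ ?n then {fst ?s i..<snd ?s i} \<inter> Ls else Ls)"
    proof
      fix i assume "i \<in> I"
      have "openin YY (Ls \<inter> {fst ?s i..<snd ?s i})"
        unfolding YY_def by (rule openin_subtopology_Int2) (rule sorg_open_Ico)
      moreover have "openin YY Ls" using openin_topspace[of YY] by (simp add: topspace_YY)
      ultimately show "openin YY (if i \<in> JJ ?n then {fst ?s i..<snd ?s i} \<inter> Ls else Ls)"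
        by (simp add: Int_commute)
    qed
  qed
  then show "openin XX (FF v)" unfolding FF_def bx_def .
qed

lemma FF_root: "FF [] = topspace XX"
  unfolding FF_def bx_def topspace_XX by simp

subsection \<open>Coordinates along a path\<close>

lemma coord_mono:
  assumes "j \<in> I" "n \<ge> Suc (4 * j)"
  shows "fst (SS f n) j \<le> fst (SS f (Suc n)) j \<and> snd (SS f (Suc n)) j \<le> snd (SS f n) j
         \<and> fst (SS f n) j < snd (SS f n) j"
proof -
  have j: "j \<in> JJ n" using assms unfolding JJ_def by auto
  show ?thesis using step_mono[OF good_SS j] good_lt[OF good_SS j] by simp
qed

lemma len_mono:
  assumes "j \<in> I" "Suc (4 * j) \<le> m" "m \<le> n"
  shows "snd (SS f n) j - fst (SS f n) j \<le> snd (SS f m) j - fst (SS f m) j"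
  using assms(3)
proof (induction n rule: dec_induct)
  case (step n)
  then show ?case using coord_mono[OF assms(1), of n f] assms(2) by linarith
qed simp

lemma len_init:
  assumes "j \<in> I"
  shows "snd (SS f (Suc (4 * j))) j - fst (SS f (Suc (4 * j))) j = 1"
  using assms by (simp add: stp_P0 Init_def)

lemma split1_at:
  assumes "j \<in> I"
  shows "snd (SS f (Suc (4 * prod_encode (j, k) + 1))) j < snd (SS f (4 * prod_encode (j, k) + 1)) j
    \<and> snd (SS f (Suc (4 * prod_encode (j, k) + 1))) j - fst (SS f (Suc (4 * prod_encode (j, k) + 1))) j
       \<le> (snd (SS f (4 * prod_encode (j, k) + 1)) j - fst (SS f (4 * prod_encode (j, k) + 1)) j) / 2"
proof -
  let ?e = "prod_encode (j, k)"
  let ?s = "SS f (4 * ?e + 1)"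
  have c: "co ?e = j" using co_enc[OF assms] .
  have jJ: "j \<in> JJ (4 * ?e + 1)" using co_JJ_P1[of ?e] c by simp
  have ab: "fst ?s j < snd ?s j" using good_lt[OF good_SS jJ] .
  have st: "SS f (Suc (4 * ?e + 1)) = Sp1 j (f (4 * ?e + 1)) ?s" unfolding SS.simps(2) stp_P1 c by (rule refl)
  have "(snd ?s j - fst ?s j) / 2 ^ Suc (f (4 * ?e + 1)) \<le> (snd ?s j - fst ?s j) / 2"
    using ab by (intro divide_left_mono) auto
  then show ?thesis unfolding st Sp1_def using cpt_less_b[OF ab] cpt_Suc_diff by simp
qed

lemma split2_at:
  assumes "j \<in> I" "irr"
  shows "fst (SS f (4 * prod_encode (j, k) + 2)) j < fst (SS f (Suc (4 * prod_encode (j, k) + 2))) j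
    \<and> (qq k \<le> fst (SS f (Suc (4 * prod_encode (j, k) + 2))) j \<or> snd (SS f (Suc (4 * prod_encode (j, k) + 2))) j \<le> qq k)"
proof -
  let ?e = "prod_encode (j, k)"
  let ?s = "SS f (4 * ?e + 2)"
  have c: "co ?e = j" using co_enc[OF assms(1)] .
  have jJ: "j \<in> JJ (4 * ?e + 2)" using co_JJ_P2[of ?e] c by simp
  have ab: "fst ?s j < snd ?s j" using good_lt[OF good_SS jJ] .
  have st: "SS f (Suc (4 * ?e + 2)) = Sp2 j (qq k) (f (4 * ?e + 2)) ?s" unfolding SS.simps(2) stp_P2 c using assms(2) by simp
  show ?thesis unfolding st using Sp2_bounds[OF ab] Sp2_avoid[OF ab] by blast
qed

lemma len_small:
  assumes "j \<in> I"
  shows "\<exists>D\<ge>Suc (4 * j). \<forall>f n. D \<le> n \<longrightarrow> snd (SS f n) j - fst (SS f n) j \<le> (1/2) ^ k"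
proof (induction k)
  case 0
  show ?case
  proof (intro exI[of _ "Suc (4 * j)"] conjI allI impI)
    fix f n assume "Suc (4 * j) \<le> n"
    then show "snd (SS f n) j - fst (SS f n) j \<le> (1/2) ^ 0"
      using len_mono[OF assms order_refl, of n f] len_init[OF assms, of f] by simp
  qed simp
next
  case (Suc k)
  then obtain D where D: "D \<ge> Suc (4 * j)" "\<forall>f n. D \<le> n \<longrightarrow> snd (SS f n) j - fst (SS f n) j \<le> (1/2) ^ k" by blast
  let ?e = "prod_encode (j, D)"
  have e1: "D \<le> ?e" by (rule le_prod_encode_2)
  have m: "D \<le> 4 * ?e + 1" using e1 by simp
  show ?case
  proof (intro exI[of _ "Suc (4 * ?e + 1)"] conjI allI impI)
    show "Suc (4 * j) \<le> Suc (4 * ?e + 1)" using D(1) m by simp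
    fix f n assume n: "Suc (4 * ?e + 1) \<le> n"
    have "snd (SS f n) j - fst (SS f n) j \<le> snd (SS f (Suc (4 * ?e + 1))) j - fst (SS f (Suc (4 * ?e + 1))) j"
      by (rule len_mono[OF assms _ n]) (use D(1) m in simp)
    also have "\<dots> \<le> (snd (SS f (4 * ?e + 1)) j - fst (SS f (4 * ?e + 1)) j) / 2"
      using split1_at[OF assms, of f D] by simp
    also have "\<dots> \<le> (1/2) ^ k / 2"
    proof -
      have h: "snd (SS f (4 * ?e + 1)) j - fst (SS f (4 * ?e + 1)) j \<le> (1/2) ^ k" using D(2) m by blast
      show ?thesis by (rule divide_right_mono[OF h]) simp
    qed
    finally show "snd (SS f n) j - fst (SS f n) j \<le> (1/2) ^ Suc k" by simp
  qed
qed

lemma coord_point: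
  assumes "j \<in> I"
  shows "\<exists>y. y \<in> Ls \<and> (\<forall>v. (\<forall>n\<ge>Suc (4 * j). fst (SS f n) j \<le> v \<and> v < snd (SS f n) j) \<longleftrightarrow> v = y)"
proof -
  let ?A = "\<lambda>n. fst (SS f n) j" and ?B = "\<lambda>n. snd (SS f n) j"
  let ?n0 = "Suc (4 * j)"
  have mono: "?A n \<le> ?A (Suc n) \<and> ?B (Suc n) \<le> ?B n \<and> ?A n < ?B n" if "n \<ge> ?n0" for n
    using coord_mono[OF assms that] .
  have small: "\<exists>n\<ge>?n0. ?B n - ?A n < e" if epos: "e > 0" for e
  proof -
    obtain k where k: "(1/2::real) ^ k < e" using real_arch_pow_inv[OF epos, of "1/2"] by auto
    obtain D where D: "D \<ge> ?n0" "\<forall>f n. D \<le> n \<longrightarrow> snd (SS f n) j - fst (SS f n) j \<le> (1/2) ^ k"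
      using len_small[OF assms, of k] by blast
    have "?B D - ?A D \<le> (1/2) ^ k" using D(2) by blast
    then have "?B D - ?A D < e" using k by linarith
    then show ?thesis using D(1) by blast
  qed
  have sdec: "\<exists>m>n. ?B m < ?B n" if "n \<ge> ?n0" for n
  proof -
    let ?e = "prod_encode (j, n)"
    have e: "n \<le> ?e" by (rule le_prod_encode_2)
    have "?B (Suc (4 * ?e + 1)) < ?B (4 * ?e + 1)" using split1_at[OF assms, of f n] by blast
    also have "?B (4 * ?e + 1) \<le> ?B n"
    proof -
      have Bm: "?B m \<le> ?B n" if "n \<le> m" for m using that
      proof (induction m rule: dec_induct)
        case (step m) then show ?case using mono[of m] \<open>n \<ge> ?n0\<close> by force
      qed simp
      have le: "n \<le> 4 * ?e + 1" using e by simp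
      show ?thesis by (rule Bm[OF le])
    qed
    finally have "?B (Suc (4 * ?e + 1)) < ?B n" .
    moreover have "Suc (4 * ?e + 1) > n" using e by simp
    ultimately show ?thesis by blast
  qed
  obtain y where y: "\<forall>n\<ge>?n0. ?A n \<le> y \<and> y < ?B n" "\<forall>v. (\<forall>n\<ge>?n0. ?A n \<le> v \<and> v < ?B n) \<longrightarrow> v = y"
    using one_d[of ?n0 ?A ?B, OF mono small sdec] by blast
  have "y \<in> Ls"
  proof (cases irr)
    case False then show ?thesis unfolding Ls_def by simp
  next
    case True
    have Amono: "?A n \<le> ?A m" if "n \<ge> ?n0" "n \<le> m" for n m using that(2)
    proof (induction m rule: dec_induct)
      case (step m) then show ?case using mono[of m] that(1) by force
    qed simp
    have Alt: "?A n < y" if "n \<ge> ?n0" for n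
    proof -
      let ?e = "prod_encode (j, n)"
      have e: "n \<le> ?e" by (rule le_prod_encode_2)
      have le: "n \<le> 4 * ?e + 2" using e by simp
      have "?A n \<le> ?A (4 * ?e + 2)" by (rule Amono[OF that le])
      also have "\<dots> < ?A (Suc (4 * ?e + 2))" using split2_at[OF assms True, of f n] by blast
      also have "\<dots> \<le> y"
      proof -
        have "Suc (4 * ?e + 2) \<ge> ?n0" using that e by simp
        then show ?thesis using y(1) by blast
      qed
      finally show ?thesis .
    qed
    have "y \<noteq> q" if qR: "q \<in> \<rat>" for q
    proof -
      obtain k where k: "qq k = q" using qq_surj[OF qR] by blast
      let ?e = "prod_encode (j, k)"
      have e: "j \<le> ?e" by (rule le_prod_encode_1)
      let ?m = "Suc (4 * ?e + 2)"
      have m: "?m \<ge> ?n0" using e by simp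
      have "q \<le> ?A ?m \<or> ?B ?m \<le> q" using split2_at[OF assms True, of f k] k by blast
      moreover have "?A ?m < y" by (rule Alt[OF m])
      moreover have "y < ?B ?m" using y(1) m by blast
      ultimately show ?thesis by force
    qed
    then show ?thesis using True unfolding Ls_def by auto
  qed
  then show ?thesis using y by blast
qed

lemma branch_point: "\<exists>p. (\<Inter>n. bx n (SS f n)) = {p}"
proof -
  have "\<forall>j\<in>I. \<exists>y. y \<in> Ls \<and> (\<forall>v. (\<forall>n\<ge>Suc (4 * j). fst (SS f n) j \<le> v \<and> v < snd (SS f n) j) \<longleftrightarrow> v = y)"
    using coord_point by blast
  then obtain Y where Y: "\<forall>j\<in>I. Y j \<in> Ls \<and> (\<forall>v. (\<forall>n\<ge>Suc (4 * j). fst (SS f n) j \<le> v \<and> v < snd (SS f n) j) \<longleftrightarrow> v = Y j)"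
    by (rule bchoice[THEN exE]) blast
  have JJn: "j \<in> JJ n \<longleftrightarrow> j \<in> I \<and> n \<ge> Suc (4 * j)" for j n unfolding JJ_def by auto
  have mem: "x \<in> (\<Inter>n. bx n (SS f n)) \<longleftrightarrow> x \<in> PiE I (\<lambda>_. Ls) \<and> (\<forall>j\<in>I. \<forall>n\<ge>Suc (4 * j). fst (SS f n) j \<le> x j \<and> x j < snd (SS f n) j)" for x
  proof
    assume "x \<in> (\<Inter>n. bx n (SS f n))"
    then have h: "\<forall>n. x \<in> PiE I (\<lambda>_. Ls) \<and> Cnd (JJ n) (SS f n) x" using bx_iff by blast
    show "x \<in> PiE I (\<lambda>_. Ls) \<and> (\<forall>j\<in>I. \<forall>n\<ge>Suc (4 * j). fst (SS f n) j \<le> x j \<and> x j < snd (SS f n) j)"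
    proof -
      have A: "x \<in> PiE I (\<lambda>_. Ls)" using h by blast
      have B: "\<forall>j\<in>I. \<forall>n\<ge>Suc (4 * j). fst (SS f n) j \<le> x j \<and> x j < snd (SS f n) j"
      proof (intro ballI allI impI)
        fix j n assume "j \<in> I" "n \<ge> Suc (4 * j)"
        then have "j \<in> JJ n" using JJn by blast
        with h show "fst (SS f n) j \<le> x j \<and> x j < snd (SS f n) j" unfolding Cnd_def by blast
      qed
      show ?thesis using A B by blast
    qed
  next
    assume h: "x \<in> PiE I (\<lambda>_. Ls) \<and> (\<forall>j\<in>I. \<forall>n\<ge>Suc (4 * j). fst (SS f n) j \<le> x j \<and> x j < snd (SS f n) j)"
    show "x \<in> (\<Inter>n. bx n (SS f n))"
    proof (rule INT_I)
      fix n
      have "Cnd (JJ n) (SS f n) x" unfolding Cnd_def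
      proof
        fix j assume "j \<in> JJ n"
        then have "j \<in> I" "n \<ge> Suc (4 * j)" using JJn by blast+
        then show "fst (SS f n) j \<le> x j \<and> x j < snd (SS f n) j" using h by blast
      qed
      then show "x \<in> bx n (SS f n)" using h bx_iff by blast
    qed
  qed
  have "(\<Inter>n. bx n (SS f n)) = {restrict Y I}"
  proof (intro equalityI subsetI)
    fix x assume "x \<in> (\<Inter>n. bx n (SS f n))"
    then have x: "x \<in> PiE I (\<lambda>_. Ls)" "\<forall>j\<in>I. \<forall>n\<ge>Suc (4 * j). fst (SS f n) j \<le> x j \<and> x j < snd (SS f n) j"
      using mem by auto
    have "x j = restrict Y I j" for j
    proof (cases "j \<in> I")
      case True then show ?thesis using Y x(2) by auto
    next
      case False then show ?thesis using x(1) by (simp add: PiE_def extensional_def)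
    qed
    then show "x \<in> {restrict Y I}" by auto
  next
    fix x assume "x \<in> {restrict Y I}"
    then have "x = restrict Y I" by simp
    then show "x \<in> (\<Inter>n. bx n (SS f n))" unfolding mem using Y by auto
  qed
  then show ?thesis by blast
qed

lemma FF_strict: "strict_branches FF"
  unfolding strict_branches_def
proof (intro allI impI)
  fix B assume "branch B"
  then obtain f where B: "B = range (path f)" using branch_is_path by blast
  have "(\<Inter>x\<in>B. FF x) = (\<Inter>n. bx n (SS f n))" unfolding B using FF_path by simp
  then show "\<exists>p. (\<Inter>x\<in>B. FF x) = {p}" using branch_point[of f] by simp
qed

lemma FF_nonempty: "FF v \<noteq> {}"
proof -
  define f where "f i = (if i < length v then v ! i else 0)" for i
  have "SS (nth v) (length v) = SS f (length v)" by (rule SS_cong) (simp add: f_def)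
  then have "FF v = bx (length v) (SS f (length v))" unfolding FF_def by simp
  moreover obtain p where "(\<Inter>n. bx n (SS f n)) = {p}" using branch_point by blast
  ultimately have "p \<in> FF v" by blast
  then show ?thesis by blast
qed

lemma node_exists:
  assumes "p \<in> topspace XX"
  shows "\<exists>v. length v = n \<and> p \<in> FF v"
proof (induction n)
  case 0 then show ?case using assms FF_root by (intro exI[of _ "[]"]) simp
next
  case (Suc n)
  then obtain v where v: "length v = n" "p \<in> FF v" by blast
  then obtain k where "p \<in> FF (v @ [k])" using FF_split[of v] by blast
  then show ?case using v(1) by (intro exI[of _ "v @ [k]"]) simp
qed

end




context PT
begin

lemma FF_grows: "grows_into XX FF"
  unfolding grows_into_def
proof (intro ballI allI impI)
  fix p U assume p: "p \<in> topspace XX" and U: "neighbourhood XX U p"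
  then obtain V where V: "openin XX V" "p \<in> V" "V \<subseteq> U" unfolding neighbourhood_def by blast
  from V(1,2) obtain W where W: "finite {i \<in> I. W i \<noteq> topspace YY}" "\<forall>i\<in>I. openin YY (W i)"
      "p \<in> PiE I W" "PiE I W \<subseteq> V"
    unfolding XX_def openin_product_topology_alt by blast
  define K where "K = {i \<in> I. W i \<noteq> Ls}"
  have Kfin: "finite K" using W(1) unfolding K_def topspace_YY .
  have KI: "K \<subseteq> I" unfolding K_def by auto
  have loc: "\<exists>\<epsilon>>0. {p i..<p i + \<epsilon>} \<inter> Ls \<subseteq> W i" if "i \<in> I" for i
  proof -
    from W(2) that have "openin YY (W i)" by blast
    then obtain T where T: "openin sorgenfrey_line T" "W i = T \<inter> Ls"
      unfolding YY_def openin_subtopology by blast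
    have "p i \<in> W i" using W(3) that by (auto simp: PiE_iff)
    then have "p i \<in> T" using T by blast
    from sorg_local[OF T(1) this] obtain \<epsilon> where "\<epsilon> > 0" "{p i..<p i + \<epsilon>} \<subseteq> T" by blast
    then show ?thesis using T(2) by blast
  qed
  have "\<forall>i\<in>K. \<exists>\<epsilon>>0. {p i..<p i + \<epsilon>} \<inter> Ls \<subseteq> W i" using loc KI by blast
  from bchoice[OF this] obtain eps where eps: "\<forall>i\<in>K. eps i > 0 \<and> {p i..<p i + eps i} \<inter> Ls \<subseteq> W i"
    by blast
  define \<epsilon> where "\<epsilon> = Min (insert 1 (eps ` K))"
  have epos: "\<epsilon> > 0" unfolding \<epsilon>_def using Kfin eps by (subst Min_gr_iff) auto
  have ele: "\<epsilon> \<le> eps i" if "i \<in> K" for i unfolding \<epsilon>_def using Kfin that by (intro Min_le) auto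
  obtain k where k: "(1/2::real) ^ k < \<epsilon>" using real_arch_pow_inv[OF epos, of "1/2"] by auto
  have "\<forall>i\<in>K. \<exists>D\<ge>Suc (4 * i). \<forall>f n. D \<le> n \<longrightarrow> snd (SS f n) i - fst (SS f n) i \<le> (1/2) ^ k"
    using len_small KI by blast
  from bchoice[OF this] obtain Df where Df:
    "\<forall>i\<in>K. Df i \<ge> Suc (4 * i) \<and> (\<forall>f n. Df i \<le> n \<longrightarrow> snd (SS f n) i - fst (SS f n) i \<le> (1/2) ^ k)"
    by blast
  define e where "e = Max (insert 0 (Df ` K))"
  have eD: "Df i \<le> e" if "i \<in> K" for i unfolding e_def using Kfin that by (intro Max_ge) auto
  have ei: "i \<le> e" if "i \<in> K" for i using eD[OF that] Df that by force
  define n where "n = 4 * e + 3"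
  obtain z where z: "length z = n" "p \<in> FF z" using node_exists[OF p] by blast
  define s where "s = SS (nth z) n"
  define r where "r = rr e"
  have pb: "p \<in> PiE I (\<lambda>_. Ls)" "Cnd (JJ n) s p" using z(2) z(1) unfolding FF_def s_def bx_iff by auto
  have sub: "{..<r} \<subseteq> JJ n" unfolding n_def r_def by (rule rr_JJ_P3)
  have rpos: "0 < r" unfolding r_def using rr_eq by blast
  have Ir: "I \<inter> {..e} = {..<r}" unfolding r_def using rr_eq by blast
  have ab: "\<forall>t<r. fst s t < snd s t" using good_lt[OF good_SS[of n "nth z"]] sub unfolding s_def by blast
  have pt: "fst s t \<le> p t \<and> p t < snd s t" if "t < r" for t using pb(2) sub that unfolding Cnd_def by blast
  have "\<forall>t\<in>{..<r}. \<exists>m. p t < cpt (fst s t) (snd s t) m"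
    using cpt_exists ab pt by blast
  from bchoice[OF this] obtain Mt where Mt: "\<forall>t\<in>{..<r}. p t < cpt (fst s t) (snd s t) (Mt t)" by blast
  define M where "M = Max (Mt ` {..<r})"
  have pM: "p t < cpt (fst s t) (snd s t) m" if "t < r" "M \<le> m" for t m
  proof -
    have "Mt t \<le> M" unfolding M_def using that(1) by (intro Max_ge) auto
    then have "cpt (fst s t) (snd s t) (Mt t) \<le> cpt (fst s t) (snd s t) m"
      using that ab by (intro cpt_mono) auto
    with Mt that(1) show ?thesis by force
  qed
  define C where "C = (\<lambda>k'. z @ [k']) ` {M * r..}"
  define G where "G = (\<Union>x\<in>C. FF x)"
  have stS: "FF (z @ [k']) = bx (Suc n) (Stair r k' s)" for k'
  proof -
    have "FF (z @ [k']) = bx (Suc n) (stp n s k')" unfolding FF_snoc z(1) s_def ..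
    also have "stp n s k' = Stair r k' s" unfolding n_def r_def by (rule stp_P3)
    finally show ?thesis .
  qed
  have GU: "G \<subseteq> U"
  proof
    fix x assume "x \<in> G"
    then obtain k' where k': "k' \<ge> M * r" "x \<in> FF (z @ [k'])" unfolding G_def C_def by blast
    have JS: "JJ (Suc n) = JJ n" unfolding n_def by (rule JJ_P3)
    have x: "x \<in> PiE I (\<lambda>_. Ls)" "Cnd (JJ n) (Stair r k' s) x" using k'(2) unfolding stS bx_iff JS by auto
    have Mk: "M \<le> k' div r"
    proof -
      have "M * r div r \<le> k' div r" using k'(1) by (rule div_le_mono)
      then show ?thesis using rpos by simp
    qed
    have "x \<in> PiE I W"
    proof (rule PiE_I)
      fix i assume i: "i \<in> I"
      show "x i \<in> W i"
      proof (cases "i \<in> K")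
        case False
        then have "W i = Ls" using i unfolding K_def by blast
        then show ?thesis using x(1) i by auto
      next
        case True
        have ir: "i < r" using ei[OF True] i Ir by blast
        have iJ: "i \<in> JJ n" using sub ir by blast
        have xi: "fst (Stair r k' s) i \<le> x i" "x i < snd (Stair r k' s) i" using x(2) iJ unfolding Cnd_def by auto
        have "cpt (fst s i) (snd s i) (k' div r) \<le> fst (Stair r k' s) i"
          using ir ab cpt_mono[of "fst s i" "snd s i" "k' div r" "Suc (k' div r)"]
          unfolding Stair_def Let_def by auto
        moreover have "p i < cpt (fst s i) (snd s i) (k' div r)" using pM[OF ir Mk] .
        ultimately have l: "p i < x i" using xi by linarith
        have sb: "snd (Stair r k' s) i \<le> snd s i" using Stair_bounds[OF rpos ab ir] by blast
        have "n \<ge> Df i" using eD[OF True] unfolding n_def by simp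
        then have "snd s i - fst s i \<le> (1/2) ^ k" using Df True unfolding s_def by blast
        then have "snd s i < fst s i + eps i" using k ele[OF True] by linarith
        then have "x i < p i + eps i" using xi(2) sb pt[OF ir] by linarith
        moreover have "x i \<in> Ls" using x(1) i by auto
        ultimately have "x i \<in> {p i..<p i + eps i} \<inter> Ls" using l by auto
        then show ?thesis using eps True by blast
      qed
    next
      fix i assume "i \<notin> I"
      then show "x i = undefined" using x(1) by (auto simp: PiE_def extensional_def)
    qed
    then show "x \<in> U" using W(4) V(3) by blast
  qed
  have Gne: "G \<noteq> {}"
  proof -
    have "z @ [M * r] \<in> C" unfolding C_def by auto
    then have "FF (z @ [M * r]) \<subseteq> G" unfolding G_def by blast
    then show ?thesis using FF_nonempty[of "z @ [M * r]"] by blast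
  qed
  have GS: "G \<in> shoot FF z"
    unfolding shoot_def
  proof (rule CollectI, rule exI[of _ C], intro conjI)
    show "G = (\<Union>x\<in>C. FF x)" unfolding G_def ..
    show "C \<subseteq> sons z" unfolding C_def sons_eq by auto
    have "sons z - C \<subseteq> (\<lambda>k'. z @ [k']) ` {..<M * r}"
    proof
      fix x assume "x \<in> sons z - C"
      then obtain k where x: "x = z @ [k]" "x \<notin> C" unfolding sons_eq by blast
      then have "\<not> M * r \<le> k" unfolding C_def by auto
      then show "x \<in> (\<lambda>k'. z @ [k']) ` {..<M * r}" using x(1) by auto
    qed
    then show "finite (sons z - C)" by (rule finite_subset) simp
  qed
  have "z \<in> scope FF p" unfolding scope_def using z(2) by simp
  moreover have "shoot FF z \<ggreater> {U}" unfolding refines_def using GS Gne GU by blast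
  ultimately show "\<exists>z\<in>scope FF p. shoot FF z \<ggreater> {U}" by blast
qed

lemma has_pi: "has_pi_tree XX"
  unfolding has_pi_tree_def pi_tree_def baire_foliage_tree_def
  using FF_open FF_locally_strict FF_strict FF_root FF_grows by blast

end

lemma PT_has:
  fixes I :: "nat set"
  shows "(I = UNIV \<or> (\<exists>n\<ge>1. I = {..<n})) \<Longrightarrow>
  has_pi_tree (product_topology (\<lambda>_. subtopology sorgenfrey_line (if irr then - \<rat> else UNIV)) I)"
proof -
  assume "I = UNIV \<or> (\<exists>n\<ge>1. I = {..<n})"
  then interpret PT irr I by unfold_locales
  show ?thesis using has_pi unfolding XX_def YY_def Ls_def .
qed

theorem corollary21:
  shows "(\<forall>n::nat. n \<ge> 1 \<longrightarrow>
            has_pi_tree (fin_power sorgenfrey_line n) \<and>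
            has_pi_tree (fin_power irrational_sorgenfrey_line n))
       \<and> has_pi_tree (omega_power sorgenfrey_line)
       \<and> has_pi_tree (omega_power irrational_sorgenfrey_line)"
proof -
  have R: "has_pi_tree (product_topology (\<lambda>_. sorgenfrey_line) I)" if "I = UNIV \<or> (\<exists>n\<ge>1. I = {..<n})" for I :: "nat set"
    using PT_has[OF that, of False] by simp
  have Q: "has_pi_tree (product_topology (\<lambda>_. irrational_sorgenfrey_line) I)" if "I = UNIV \<or> (\<exists>n\<ge>1. I = {..<n})" for I :: "nat set"
    using PT_has[OF that, of True] unfolding irrational_sorgenfrey_line_def by simp
  show ?thesis unfolding fin_power_def omega_power_def using R Q by blast
qed


end
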